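(* Let $\pi,\pi'$ be patterns of length $k$ with $\pi(1)=\pi'(1)$ that are super-strongly c-forest-Wilf equivalent. If it is not the case that $k$ is odd and $\pi(1)=\frac{k+1}{2}$, then $\pi=\pi'$. If $k$ is odd and $\pi(1)=\frac{k+1}{2}$, then for every $i\in[k]$, $\pi(i)=\pi'(i)$ or $\pi(i)+\pi'(i)=k+1$.
   Context: A pattern of length $k$ is a permutation of $[k]$. Rooted forests are unordered with a distinguished root in each component. A consecutive instance of $\pi$ in a labeled rooted forest is a downward path of $k$ vertices $v_1,\dots,v_k$ ($v_i$ the parent of $v_{i+1}$) whose labels are in the same relative order as $\pi$. Patterns $\pi,\pi'$ of length $k$ are super-strongly c-forest-Wilf equivalent if for every unlabeled rooted forest $F$ on $n$ vertices and every set $S$ of downward paths of $k$ vertices in $F$, the number of labelings of $F$ with distinct labels from $[n]$ for which $S$ is exactly the set of consecutive instances of $\pi$ equals the corresponding number for $\pi'$. *)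

theory Defs
  imports Main "HOL-Library.FuncSet"
begin

definition pattern :: "nat \<Rightarrow> (nat \<Rightarrow> nat) \<Rightarrow> bool" where
  "pattern k \<pi> \<longleftrightarrow> bij_betw \<pi> {1..k} {1..k}"

text \<open>An (unlabeled) rooted forest on the vertex set {0..<n}, given by a parent map:
  roots have parent None; the parent relation is acyclic.\<close>
definition rooted_forest :: "nat \<Rightarrow> (nat \<Rightarrow> nat option) \<Rightarrow> bool" where
  "rooted_forest n par \<longleftrightarrow>
     (\<forall>v<n. \<forall>u. par v = Some u \<longrightarrow> u < n) \<and>
     acyclic {(u, v). v < n \<and> par v = Some u}"

definition down_paths :: "nat \<Rightarrow> (nat \<Rightarrow> nat option) \<Rightarrow> nat \<Rightarrow> nat list set" where
  "down_paths n par k = {p. length p = k \<and> set p \<subseteq> {0..<n} \<and>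
      (\<forall>i. Suc i < k \<longrightarrow> par (p ! Suc i) = Some (p ! i))}"

definition labelings :: "nat \<Rightarrow> (nat \<Rightarrow> nat) set" where
  "labelings n = {L \<in> {0..<n} \<rightarrow>\<^sub>E {1..n}. bij_betw L {0..<n} {1..n}}"

definition is_instance :: "nat \<Rightarrow> (nat \<Rightarrow> nat) \<Rightarrow> (nat \<Rightarrow> nat) \<Rightarrow> nat list \<Rightarrow> bool" where
  "is_instance k \<pi> L p \<longleftrightarrow>
     (\<forall>i<k. \<forall>j<k. L (p ! i) < L (p ! j) \<longleftrightarrow> \<pi> (Suc i) < \<pi> (Suc j))"

definition instances :: "nat \<Rightarrow> (nat \<Rightarrow> nat option) \<Rightarrow> nat \<Rightarrow> (nat \<Rightarrow> nat) \<Rightarrow> (nat \<Rightarrow> nat) \<Rightarrow> nat list set" where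
  "instances n par k \<pi> L = {p \<in> down_paths n par k. is_instance k \<pi> L p}"

definition super_strongly_cfw_equiv :: "nat \<Rightarrow> (nat \<Rightarrow> nat) \<Rightarrow> (nat \<Rightarrow> nat) \<Rightarrow> bool" where
  "super_strongly_cfw_equiv k \<pi> \<pi>' \<longleftrightarrow>
     (\<forall>n par S. rooted_forest n par \<and> S \<subseteq> down_paths n par k \<longrightarrow>
        card {L \<in> labelings n. instances n par k \<pi> L = S}
        = card {L \<in> labelings n. instances n par k \<pi>' L = S})"

end

theory Submission
  imports Defs "HOL-Library.Infinite_Set" "HOL-Computational_Algebra.Polynomial"
begin

definition lab :: "'v set \<Rightarrow> ('v \<Rightarrow> nat) set" where
  "lab V = {L \<in> V \<rightarrow>\<^sub>E {1..card V}. bij_betw L V {1..card V}}"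

definition rk :: "'v set \<Rightarrow> ('v \<Rightarrow> nat) \<Rightarrow> 'v \<Rightarrow> nat" where
  "rk A L v = card {u \<in> A. L u \<le> L v}"

definition rinv :: "'v set \<Rightarrow> (('v \<Rightarrow> nat) \<Rightarrow> bool) \<Rightarrow> bool" where
  "rinv A \<Phi> \<longleftrightarrow> (\<forall>L L'. (\<forall>u\<in>A. \<forall>v\<in>A. (L u < L v) = (L' u < L' v)) \<longrightarrow> \<Phi> L = \<Phi> L')"

lemma rinvD: "rinv A \<Phi> \<Longrightarrow> (\<And>u v. u \<in> A \<Longrightarrow> v \<in> A \<Longrightarrow> (L u < L v) = (L' u < L' v)) \<Longrightarrow> \<Phi> L = \<Phi> L'"
  unfolding rinv_def by blast

lemma rk_strict:
  assumes "finite A" "v \<in> A" "L u < L v"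
  shows "rk A L u < rk A L v"
  unfolding rk_def
proof (rule psubset_card_mono)
  show "finite {w \<in> A. L w \<le> L v}" using assms by auto
  show "{w \<in> A. L w \<le> L u} \<subset> {w \<in> A. L w \<le> L v}" using assms by force
qed

lemma rk_less_iff:
  assumes "finite A" "u \<in> A" "v \<in> A"
  shows "(rk A L u < rk A L v) = (L u < L v)"
proof
  assume h: "rk A L u < rk A L v"
  show "L u < L v"
  proof (rule ccontr)
    assume "\<not> L u < L v"
    then have "L v < L u \<or> L v = L u" by auto
    then show False
    proof
      assume "L v < L u" then have "rk A L v < rk A L u" using rk_strict[OF assms(1,2)] by blast
      then show False using h by simp
    next
      assume "L v = L u" then have "rk A L v = rk A L u" unfolding rk_def by simp
      then show False using h by simp
    qed
  qed
next
  assume "L u < L v" then show "rk A L u < rk A L v" using rk_strict[OF assms(1,3)] by blast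
qed

lemma rk_range:
  assumes "finite A" "v \<in> A"
  shows "rk A L v \<in> {1..card A}"
proof -
  have "{u \<in> A. L u \<le> L v} \<noteq> {}" using assms by auto
  then have "card {u \<in> A. L u \<le> L v} \<ge> 1" using assms
    by (metis (no_types, lifting) card_0_eq finite_subset less_one linorder_not_le mem_Collect_eq subsetI)
  moreover have "card {u \<in> A. L u \<le> L v} \<le> card A" using assms by (intro card_mono) auto
  ultimately show ?thesis unfolding rk_def by auto
qed

lemma inj_bij_interval:
  assumes "finite V" "inj_on f V" "f ` V \<subseteq> {1..card V}"
  shows "bij_betw f V {1..card V}"
proof -
  have "card (f ` V) = card {1..card V}" using assms card_image by fastforce
  then have "f ` V = {1..card V}" using assms by (intro card_subset_eq) auto
  then show ?thesis using assms unfolding bij_betw_def by auto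
qed

lemma labI:
  assumes "finite V" "inj_on f V" "\<And>v. v \<in> V \<Longrightarrow> f v \<in> {1..card V}" "f \<in> extensional V"
  shows "f \<in> lab V"
proof -
  have "bij_betw f V {1..card V}" using assms by (intro inj_bij_interval) auto
  moreover have "f \<in> V \<rightarrow>\<^sub>E {1..card V}" using assms(3,4) by (simp add: PiE_iff)
  ultimately show ?thesis unfolding lab_def by blast
qed

lemma labD:
  assumes "L \<in> lab V"
  shows "inj_on L V" "L ` V = {1..card V}" "L \<in> extensional V" "bij_betw L V {1..card V}"
  using assms unfolding lab_def bij_betw_def by (auto simp: PiE_def)

lemma rk_in_lab:
  assumes "finite A" "inj_on L A"
  shows "restrict (rk A L) A \<in> lab A"
proof (rule labI)
  show "inj_on (restrict (rk A L) A) A"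
  proof (rule inj_onI)
    fix u v assume uv: "u \<in> A" "v \<in> A" "restrict (rk A L) A u = restrict (rk A L) A v"
    show "u = v"
    proof (rule ccontr)
      assume "u \<noteq> v"
      then have "L u \<noteq> L v" using assms uv inj_onD by metis
      then have "L u < L v \<or> L v < L u" by auto
      then show False using rk_less_iff[OF assms(1), of u v L] rk_less_iff[OF assms(1), of v u L] uv by auto
    qed
  qed
next
  fix v assume "v \<in> A"
  then show "restrict (rk A L) A v \<in> {1..card A}" using rk_range[OF assms(1)] by simp
qed (use assms in simp_all)

lemma lab_rk:
  assumes "finite A" "M \<in> lab A" "v \<in> A"
  shows "rk A M v = M v"
proof -
  note D = labD[OF assms(2)]
  have "M ` {u \<in> A. M u \<le> M v} = {1..M v}"
  proof
    show "M ` {u \<in> A. M u \<le> M v} \<subseteq> {1..M v}" using D(2) by auto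
    show "{1..M v} \<subseteq> M ` {u \<in> A. M u \<le> M v}"
    proof
      fix y assume y: "y \<in> {1..M v}"
      have "M v \<le> card A" using D(2) assms(3) by auto
      then have "y \<in> M ` A" using y D(2) by auto
      then obtain u where "u \<in> A" "y = M u" by auto
      then show "y \<in> M ` {u \<in> A. M u \<le> M v}" using y by auto
    qed
  qed
  moreover have "inj_on M {u \<in> A. M u \<le> M v}" using D(1) by (rule inj_on_subset) auto
  ultimately have "card {u \<in> A. M u \<le> M v} = card {1..M v}" by (metis card_image)
  then show ?thesis unfolding rk_def by simp
qed

lemma finite_lab: "finite V \<Longrightarrow> finite (lab V)"
  unfolding lab_def by (rule finite_subset[of _ "V \<rightarrow>\<^sub>E {1..card V}"]) (auto intro: finite_PiE)

lemma ordinal_count: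
  assumes fA: "finite A" and fB: "finite B" and disj: "A \<inter> B = {}" "x \<notin> A" "x \<notin> B"
    and rA: "rinv A \<Phi>A" and rB: "rinv B \<Phi>B"
  shows "card {L \<in> lab (insert x (B \<union> A)). (\<forall>v\<in>B. L v < L x) \<and> (\<forall>v\<in>A. L x < L v) \<and> \<Phi>B L \<and> \<Phi>A L}
         = card {M \<in> lab B. \<Phi>B M} * card {M \<in> lab A. \<Phi>A M}"
proof -
  define V where "V = insert x (B \<union> A)"
  define X where "X = {L \<in> lab V. (\<forall>v\<in>B. L v < L x) \<and> (\<forall>v\<in>A. L x < L v) \<and> \<Phi>B L \<and> \<Phi>A L}"
  define YB where "YB = {M \<in> lab B. \<Phi>B M}"
  define YA where "YA = {M \<in> lab A. \<Phi>A M}"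
  define f where "f = (\<lambda>L. (restrict (rk B L) B, restrict (rk A L) A))"
  define g where "g = (\<lambda>(M1, M2). (\<lambda>v. if v \<in> B then M1 v else if v = x then card B + 1
          else if v \<in> A then M2 v + card B + 1 else undefined))"
  have fV: "finite V" using fA fB V_def by simp
  have cV: "card V = card B + card A + 1"
    using fA fB disj unfolding V_def by (simp add: card_Un_disjoint Int_commute)
  have XV: "L \<in> lab V" if "L \<in> X" for L using that X_def by simp
  have Xrk: "L v = rk V L v" if "L \<in> X" "v \<in> V" for L v
    using lab_rk[OF fV XV[OF that(1)] that(2)] by simp
  have XB: "L v < L x" if "L \<in> X" "v \<in> B" for L v using that X_def by auto
  have XA: "L x < L v" if "L \<in> X" "v \<in> A" for L v using that X_def by auto
  have rkB: "rk V L v = rk B L v" if "L \<in> X" "v \<in> B" for L v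
  proof -
    have "{u \<in> V. L u \<le> L v} = {u \<in> B. L u \<le> L v}"
    proof (intro equalityI subsetI)
      fix u assume u: "u \<in> {u \<in> V. L u \<le> L v}"
      have "L v < L x" using XB[OF that] .
      moreover have "u \<in> A \<Longrightarrow> L x < L u" using XA[OF that(1)] by blast
      ultimately show "u \<in> {u \<in> B. L u \<le> L v}" using u unfolding V_def by auto
    qed (auto simp: V_def)
    then show ?thesis unfolding rk_def by simp
  qed
  have rkx: "rk V L x = card B + 1" if "L \<in> X" for L
  proof -
    have "{u \<in> V. L u \<le> L x} = insert x B"
    proof (intro equalityI subsetI)
      fix u assume u: "u \<in> {u \<in> V. L u \<le> L x}"
      have "u \<in> A \<Longrightarrow> L x < L u" using XA[OF that(1)] by blast
      then show "u \<in> insert x B" using u unfolding V_def by auto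
    next
      fix u assume u: "u \<in> insert x B"
      have "u \<in> B \<Longrightarrow> L u < L x" using XB[OF that(1)] by blast
      then show "u \<in> {u \<in> V. L u \<le> L x}" using u unfolding V_def by auto
    qed
    then show ?thesis unfolding rk_def using fB disj by simp
  qed
  have rkA: "rk V L v = card B + 1 + rk A L v" if "L \<in> X" "v \<in> A" for L v
  proof -
    have lx: "L x < L v" using XA[OF that] .
    have "{u \<in> V. L u \<le> L v} = insert x B \<union> {u \<in> A. L u \<le> L v}"
    proof (intro equalityI subsetI)
      fix u assume u: "u \<in> {u \<in> V. L u \<le> L v}"
      then show "u \<in> insert x B \<union> {u \<in> A. L u \<le> L v}" unfolding V_def by auto
    next
      fix u assume u: "u \<in> insert x B \<union> {u \<in> A. L u \<le> L v}"
      have "u \<in> B \<Longrightarrow> L u < L x" using XB[OF that(1)] by blast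
      then show "u \<in> {u \<in> V. L u \<le> L v}" using u lx unfolding V_def by auto
    qed
    moreover have "card (insert x B \<union> {u \<in> A. L u \<le> L v}) = card B + 1 + card {u \<in> A. L u \<le> L v}"
      using fA fB disj by (subst card_Un_disjoint) auto
    ultimately show ?thesis unfolding rk_def by simp
  qed
  have bij: "bij_betw f X (YB \<times> YA)"
  proof (rule bij_betw_byWitness[where f' = g])
    show "\<forall>L\<in>X. g (f L) = L"
    proof
      fix L assume L: "L \<in> X"
      have ext: "L \<in> extensional V" using labD(3)[OF XV[OF L]] .
      show "g (f L) = L"
      proof
        fix v
        show "g (f L) v = L v"
        proof (cases "v \<in> V")
          case True
          then show ?thesis
            using Xrk[OF L True] rkB[OF L] rkx[OF L] rkA[OF L] disj
            unfolding f_def g_def V_def by auto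
        next
          case False
          then show ?thesis using ext unfolding f_def g_def V_def extensional_def by auto
        qed
      qed
    qed
    show "\<forall>y\<in>YB \<times> YA. f (g y) = y"
    proof
      fix y assume y: "y \<in> YB \<times> YA"
      obtain M1 M2 where y12: "y = (M1, M2)" by force
      have M1: "M1 \<in> lab B" and M2: "M2 \<in> lab A" using y y12 YB_def YA_def by auto
      have e1: "restrict (rk B (g y)) B = M1"
      proof
        fix v show "restrict (rk B (g y)) B v = M1 v"
        proof (cases "v \<in> B")
          case True
          have "rk B (g y) v = rk B M1 v"
            unfolding rk_def g_def y12 using True by (auto intro!: arg_cong[where f=card])
          then show ?thesis using lab_rk[OF fB M1 True] True by simp
        next
          case False then show ?thesis using labD(3)[OF M1] by (simp add: extensional_def)
        qed
      qed
      have e2: "restrict (rk A (g y)) A = M2"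
      proof
        fix v show "restrict (rk A (g y)) A v = M2 v"
        proof (cases "v \<in> A")
          case True
          have "rk A (g y) v = rk A M2 v"
            unfolding rk_def g_def y12 using True disj by (auto intro!: arg_cong[where f=card])
          then show ?thesis using lab_rk[OF fA M2 True] True by simp
        next
          case False then show ?thesis using labD(3)[OF M2] by (simp add: extensional_def)
        qed
      qed
      show "f (g y) = y" using e1 e2 y12 f_def by simp
    qed
    show "f ` X \<subseteq> YB \<times> YA"
    proof
      fix p assume "p \<in> f ` X"
      then obtain L where L: "L \<in> X" and p: "p = f L" by auto
      have inj: "inj_on L V" using labD(1)[OF XV[OF L]] .
      have i1: "restrict (rk B L) B \<in> lab B"
        using rk_in_lab[OF fB inj_on_subset[OF inj]] V_def by auto
      have i2: "restrict (rk A L) A \<in> lab A"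
        using rk_in_lab[OF fA inj_on_subset[OF inj]] V_def by auto
      have p1: "\<Phi>B (restrict (rk B L) B) = \<Phi>B L"
        using rinvD[OF rB, of "restrict (rk B L) B" L] rk_less_iff[OF fB] by auto
      have p2: "\<Phi>A (restrict (rk A L) A) = \<Phi>A L"
        using rinvD[OF rA, of "restrict (rk A L) A" L] rk_less_iff[OF fA] by auto
      show "p \<in> YB \<times> YA" using p i1 i2 p1 p2 L unfolding f_def YB_def YA_def X_def by auto
    qed
    show "g ` (YB \<times> YA) \<subseteq> X"
    proof
      fix L assume "L \<in> g ` (YB \<times> YA)"
      then obtain M1 M2 where M1: "M1 \<in> YB" and M2: "M2 \<in> YA" and L: "L = g (M1, M2)" by auto
      have l1: "M1 \<in> lab B" "\<Phi>B M1" and l2: "M2 \<in> lab A" "\<Phi>A M2" using M1 M2 YB_def YA_def by auto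
      have r1: "M1 v \<in> {1..card B}" if "v \<in> B" for v using labD(2)[OF l1(1)] that by auto
      have r2: "M2 v \<in> {1..card A}" if "v \<in> A" for v using labD(2)[OF l2(1)] that by auto
      have Lv: "L v = (if v \<in> B then M1 v else if v = x then card B + 1
          else if v \<in> A then M2 v + card B + 1 else undefined)" for v
        unfolding L g_def by simp
      have inj: "inj_on L V"
      proof (rule inj_onI)
        fix u v assume uv: "u \<in> V" "v \<in> V" "L u = L v"
        show "u = v"
          using uv r1[of u] r1[of v] r2[of u] r2[of v] disj
            inj_onD[OF labD(1)[OF l1(1)], of u v] inj_onD[OF labD(1)[OF l2(1)], of u v]
          unfolding V_def Lv by (auto split: if_splits)
      qed
      have rng: "L v \<in> {1..card V}" if "v \<in> V" for v
        using that r1[of v] r2[of v] cV unfolding V_def Lv by (auto split: if_splits)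
      have ext: "L \<in> extensional V" unfolding extensional_def V_def Lv by auto
      have "L \<in> lab V" by (rule labI[OF fV inj rng ext])
      moreover have "\<forall>v\<in>B. L v < L x"
      proof
        fix v assume v: "v \<in> B"
        then have "M1 v \<le> card B" using r1 by auto
        then show "L v < L x" using v disj by (simp add: Lv)
      qed
      moreover have "\<forall>v\<in>A. L x < L v"
      proof
        fix v assume v: "v \<in> A"
        then have "M2 v \<ge> 1" using r2 by auto
        then show "L x < L v" using v disj by (auto simp add: Lv)
      qed
      moreover have "\<Phi>B L" using rinvD[OF rB, of L M1] l1(2) unfolding Lv by auto
      moreover have "\<Phi>A L"
      proof -
        have "(L u < L v) = (M2 u < M2 v)" if "u \<in> A" "v \<in> A" for u v
        proof -
          have "u \<notin> B" "v \<notin> B" "u \<noteq> x" "v \<noteq> x" using that disj by auto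
          then show ?thesis using that by (simp add: Lv)
        qed
        then show ?thesis using rinvD[OF rA, of L M2] l2(2) by blast
      qed
      ultimately show "L \<in> X" unfolding X_def by blast
    qed
  qed
  have "card X = card (YB \<times> YA)" using bij_betw_same_card[OF bij] .
  then show ?thesis unfolding X_def YB_def YA_def V_def by (simp add: card_cartesian_product)
qed

definition en :: "nat set \<Rightarrow> nat \<Rightarrow> nat" where
  "en T j = enumerate T (j - 1)"

lemma en_in: "finite T \<Longrightarrow> j \<in> {1..card T} \<Longrightarrow> en T j \<in> T"
  unfolding en_def by (intro finite_enumerate_in_set) auto

lemma en_less_iff:
  "finite T \<Longrightarrow> i \<in> {1..card T} \<Longrightarrow> j \<in> {1..card T} \<Longrightarrow> (en T i < en T j) = (i < j)"
  unfolding en_def by (subst finite_enumerate_mono_iff) auto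

lemma en_le_iff:
  "finite T \<Longrightarrow> i \<in> {1..card T} \<Longrightarrow> j \<in> {1..card T} \<Longrightarrow> (en T i \<le> en T j) = (i \<le> j)"
  using en_less_iff[of T j i] by (simp add: not_less[symmetric])

lemma en_inj: "finite T \<Longrightarrow> inj_on (en T) {1..card T}"
proof (rule inj_onI)
  fix i j assume fT: "finite T" and ij: "i \<in> {1..card T}" "j \<in> {1..card T}" "en T i = en T j"
  have "\<not> i < j" using en_less_iff[OF fT ij(1,2)] ij(3) by simp
  moreover have "\<not> j < i" using en_less_iff[OF fT ij(2,1)] ij(3) by simp
  ultimately show "i = j" by simp
qed

lemma en_image: "finite T \<Longrightarrow> en T ` {1..card T} = T"
proof
  assume fT: "finite T"
  show "en T ` {1..card T} \<subseteq> T" using en_in[OF fT] by auto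
  show "T \<subseteq> en T ` {1..card T}"
  proof
    fix t assume "t \<in> T"
    then obtain n where n: "n < card T" "enumerate T n = t" using finite_enumerate_Ex[OF fT] by blast
    then have "Suc n \<in> {1..card T}" "en T (Suc n) = t" unfolding en_def by auto
    then show "t \<in> en T ` {1..card T}" by blast
  qed
qed

lemma en_rk:
  assumes fT: "finite T" and t: "t \<in> T"
  shows "en T (card {s \<in> T. s \<le> t}) = t"
proof -
  have "t \<in> en T ` {1..card T}" using en_image[OF fT] t by simp
  then obtain j where j: "j \<in> {1..card T}" "en T j = t" by (elim imageE) simp
  have "{s \<in> T. s \<le> t} = en T ` {1..j}"
  proof (intro equalityI subsetI)
    fix s assume s: "s \<in> {s \<in> T. s \<le> t}"
    then have "s \<in> en T ` {1..card T}" using en_image[OF fT] by simp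
    then obtain j' where j': "j' \<in> {1..card T}" "en T j' = s" by (elim imageE) simp
    have "en T j' \<le> en T j" using s j j' by simp
    then have "j' \<le> j" using en_le_iff[OF fT j'(1) j(1)] by simp
    then show "s \<in> en T ` {1..j}" using j' by (intro image_eqI[of _ _ j']) auto
  next
    fix s assume "s \<in> en T ` {1..j}"
    then obtain j' where j': "j' \<in> {1..j}" "s = en T j'" by (elim imageE) simp
    then have j'': "j' \<in> {1..card T}" using j by auto
    have "en T j' \<le> en T j" using en_le_iff[OF fT j'' j(1)] j' by simp
    then show "s \<in> {s \<in> T. s \<le> t}" using en_in[OF fT j''] j' j by simp
  qed
  moreover have "inj_on (en T) {1..j}" using en_inj[OF fT] j(1) by (auto intro: inj_on_subset)
  ultimately have "card {s \<in> T. s \<le> t} = j" by (simp add: card_image)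
  then show ?thesis using j by simp
qed

lemma rk_image:
  assumes "inj_on L A" "v \<in> A"
  shows "rk A L v = card {s \<in> L ` A. s \<le> L v}"
proof -
  have "{s \<in> L ` A. s \<le> L v} = L ` {u \<in> A. L u \<le> L v}" by auto
  moreover have "inj_on L {u \<in> A. L u \<le> L v}" using assms(1) by (rule inj_on_subset) auto
  ultimately show ?thesis unfolding rk_def by (simp add: card_image)
qed

lemma merge_count:
  assumes fA: "finite A" and fB: "finite B" and disj: "A \<inter> B = {}"
    and rA: "rinv A \<Phi>A" and rB: "rinv B \<Phi>B"
  shows "card {L \<in> lab (A \<union> B). \<Phi>A L \<and> \<Phi>B L}
    = (card (A \<union> B) choose card A) * (card {M \<in> lab A. \<Phi>A M} * card {M \<in> lab B. \<Phi>B M})"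
proof -
  define V where "V = A \<union> B"
  define N where "N = card V"
  define X where "X = {L \<in> lab V. \<Phi>A L \<and> \<Phi>B L}"
  define TS where "TS = {T. T \<subseteq> {1..N} \<and> card T = card A}"
  define YA where "YA = {M \<in> lab A. \<Phi>A M}"
  define YB where "YB = {M \<in> lab B. \<Phi>B M}"
  define f where "f = (\<lambda>L. (L ` A, restrict (rk A L) A, restrict (rk B L) B))"
  define g where "g = (\<lambda>(T, M1, M2). (\<lambda>v. if v \<in> A then en T (M1 v)
      else if v \<in> B then en ({1..N} - T) (M2 v) else undefined))"
  have fV: "finite V" using fA fB V_def by simp
  have NAB: "N = card A + card B" unfolding N_def V_def using fA fB disj by (simp add: card_Un_disjoint)
  have XV: "L \<in> lab V" if "L \<in> X" for L using that X_def by simp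
  have imgB: "L ` B = {1..N} - L ` A" if "L \<in> lab V" for L
    using labD(1,2)[OF that] disj unfolding V_def N_def inj_on_def by blast
  have bij: "bij_betw f X (TS \<times> YA \<times> YB)"
  proof (rule bij_betw_byWitness[where f' = g])
    show "\<forall>L\<in>X. g (f L) = L"
    proof
      fix L assume L: "L \<in> X"
      note LV = XV[OF L]
      have inj: "inj_on L V" using labD(1)[OF LV] .
      have injA: "inj_on L A" and injB: "inj_on L B" using inj V_def by (auto intro: inj_on_subset)
      have fLA: "finite (L ` A)" "finite ({1..N} - L ` A)" using fA by auto
      show "g (f L) = L"
      proof
        fix v
        show "g (f L) v = L v"
        proof (cases "v \<in> A")
          case True
          then show ?thesis using en_rk[OF fLA(1)] rk_image[OF injA True]
            unfolding f_def g_def by simp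
        next
          case nA: False
          show ?thesis
          proof (cases "v \<in> B")
            case True
            have Lv: "L v \<in> {1..N} - L ` A" using imgB[OF LV] True by blast
            have "en ({1..N} - L ` A) (card {s \<in> {1..N} - L ` A. s \<le> L v}) = L v"
              by (rule en_rk[OF fLA(2) Lv])
            moreover have "rk B L v = card {s \<in> {1..N} - L ` A. s \<le> L v}"
              using rk_image[OF injB True] imgB[OF LV] by simp
            ultimately have "en ({1..N} - L ` A) (rk B L v) = L v" by simp
            then show ?thesis using nA True unfolding f_def g_def by simp
          next
            case False
            then show ?thesis using nA labD(3)[OF LV] unfolding f_def g_def V_def extensional_def by auto
          qed
        qed
      qed
    qed
    show "\<forall>y\<in>TS \<times> YA \<times> YB. f (g y) = y"
    proof
      fix y assume y: "y \<in> TS \<times> YA \<times> YB"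
      obtain T M1 M2 where y3: "y = (T, M1, M2)" by (cases y) auto
      have T: "T \<subseteq> {1..N}" "card T = card A" and M1: "M1 \<in> lab A" and M2: "M2 \<in> lab B"
        using y y3 TS_def YA_def YB_def by auto
      have fT: "finite T" using T(1) finite_subset by blast
      have cT': "card ({1..N} - T) = card B" using T NAB by (simp add: card_Diff_subset fT)
      have fT': "finite ({1..N} - T)" by simp
      have gA: "g y v = en T (M1 v)" if "v \<in> A" for v using that unfolding g_def y3 by simp
      have gB: "g y v = en ({1..N} - T) (M2 v)" if "v \<in> B" for v
        using that disj unfolding g_def y3 by auto
      have r1: "M1 v \<in> {1..card T}" if "v \<in> A" for v using labD(2)[OF M1] that T by auto
      have r2: "M2 v \<in> {1..card ({1..N} - T)}" if "v \<in> B" for v using labD(2)[OF M2] that cT' by auto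
      have e0: "g y ` A = T"
      proof -
        have "g y ` A = en T ` (M1 ` A)" using gA by (auto simp: image_image)
        also have "M1 ` A = {1..card T}" using labD(2)[OF M1] T by simp
        finally show ?thesis using en_image[OF fT] by simp
      qed
      have e1: "restrict (rk A (g y)) A = M1"
      proof
        fix v show "restrict (rk A (g y)) A v = M1 v"
        proof (cases "v \<in> A")
          case True
          have "{u \<in> A. g y u \<le> g y v} = {u \<in> A. M1 u \<le> M1 v}"
            using gA en_le_iff[OF fT r1 r1] True by auto
          then have "rk A (g y) v = rk A M1 v" unfolding rk_def by simp
          then show ?thesis using lab_rk[OF fA M1 True] True by simp
        next
          case False then show ?thesis using labD(3)[OF M1] by (simp add: extensional_def)
        qed
      qed
      have e2: "restrict (rk B (g y)) B = M2"
      proof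
        fix v show "restrict (rk B (g y)) B v = M2 v"
        proof (cases "v \<in> B")
          case True
          have "{u \<in> B. g y u \<le> g y v} = {u \<in> B. M2 u \<le> M2 v}"
            using gB en_le_iff[OF fT' r2 r2] True by auto
          then have "rk B (g y) v = rk B M2 v" unfolding rk_def by simp
          then show ?thesis using lab_rk[OF fB M2 True] True by simp
        next
          case False then show ?thesis using labD(3)[OF M2] by (simp add: extensional_def)
        qed
      qed
      show "f (g y) = y" using e0 e1 e2 y3 f_def by simp
    qed
    show "f ` X \<subseteq> TS \<times> YA \<times> YB"
    proof
      fix p assume "p \<in> f ` X"
      then obtain L where L: "L \<in> X" and p: "p = f L" by auto
      note LV = XV[OF L]
      have inj: "inj_on L V" using labD(1)[OF LV] .
      have injA: "inj_on L A" and injB: "inj_on L B" using inj V_def by (auto intro: inj_on_subset)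
      have t1: "L ` A \<in> TS" using labD(2)[OF LV] injA unfolding TS_def N_def V_def
        by (auto simp: card_image)
      have i1: "restrict (rk A L) A \<in> lab A" using rk_in_lab[OF fA injA] .
      have i2: "restrict (rk B L) B \<in> lab B" using rk_in_lab[OF fB injB] .
      have p1: "\<Phi>A (restrict (rk A L) A) = \<Phi>A L"
        using rinvD[OF rA, of "restrict (rk A L) A" L] rk_less_iff[OF fA] by auto
      have p2: "\<Phi>B (restrict (rk B L) B) = \<Phi>B L"
        using rinvD[OF rB, of "restrict (rk B L) B" L] rk_less_iff[OF fB] by auto
      show "p \<in> TS \<times> YA \<times> YB" using p t1 i1 i2 p1 p2 L unfolding f_def YA_def YB_def X_def by auto
    qed
    show "g ` (TS \<times> YA \<times> YB) \<subseteq> X"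
    proof
      fix L assume "L \<in> g ` (TS \<times> YA \<times> YB)"
      then obtain T M1 M2 where y: "(T, M1, M2) \<in> TS \<times> YA \<times> YB" and L: "L = g (T, M1, M2)" by auto
      have T: "T \<subseteq> {1..N}" "card T = card A" and M1: "M1 \<in> lab A" "\<Phi>A M1"
        and M2: "M2 \<in> lab B" "\<Phi>B M2"
        using y TS_def YA_def YB_def by auto
      have fT: "finite T" using T(1) finite_subset by blast
      have cT': "card ({1..N} - T) = card B" using T NAB by (simp add: card_Diff_subset fT)
      have fT': "finite ({1..N} - T)" by simp
      have gA: "L v = en T (M1 v)" if "v \<in> A" for v using that unfolding g_def L by simp
      have gB: "L v = en ({1..N} - T) (M2 v)" if "v \<in> B" for v
        using that disj unfolding g_def L by auto
      have gO: "L v = undefined" if "v \<notin> V" for v using that unfolding g_def L V_def by simp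
      have r1: "M1 v \<in> {1..card T}" if "v \<in> A" for v using labD(2)[OF M1(1)] that T by auto
      have r2: "M2 v \<in> {1..card ({1..N} - T)}" if "v \<in> B" for v using labD(2)[OF M2(1)] that cT' by auto
      have inA: "L v \<in> T" if "v \<in> A" for v using gA[OF that] en_in[OF fT r1[OF that]] by simp
      have inB: "L v \<in> {1..N} - T" if "v \<in> B" for v using gB[OF that] en_in[OF fT' r2[OF that]] by simp
      have inj: "inj_on L V"
      proof (rule inj_onI)
        fix u v assume uv: "u \<in> V" "v \<in> V" "L u = L v"
        show "u = v"
        proof (cases "u \<in> A")
          case uA: True
          show ?thesis
          proof (cases "v \<in> A")
            case True
            then have "M1 u = M1 v" using uv gA uA inj_onD[OF en_inj[OF fT] _ r1 r1] by metis
            then show ?thesis using inj_onD[OF labD(1)[OF M1(1)]] uA True by blast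
          next
            case False
            then have "v \<in> B" using uv V_def by auto
            then show ?thesis using inA[OF uA] inB uv by auto
          qed
        next
          case uA: False
          then have uB: "u \<in> B" using uv V_def by auto
          show ?thesis
          proof (cases "v \<in> A")
            case True
            then show ?thesis using inA inB[OF uB] uv by auto
          next
            case False
            then have vB: "v \<in> B" using uv V_def by auto
            then have "M2 u = M2 v" using uv gB uB inj_onD[OF en_inj[OF fT'] _ r2 r2] by metis
            then show ?thesis using inj_onD[OF labD(1)[OF M2(1)]] uB vB by blast
          qed
        qed
      qed
      have rng: "L v \<in> {1..card V}" if "v \<in> V" for v
      proof (cases "v \<in> A")
        case True
        then show ?thesis using inA[OF True] T(1) N_def by blast
      next
        case False
        then have "v \<in> B" using that V_def by auto
        then show ?thesis using inB N_def by blast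
      qed
      have ext: "L \<in> extensional V" using gO unfolding extensional_def by auto
      have "L \<in> lab V" by (rule labI[OF fV inj rng ext])
      moreover have "\<Phi>A L"
      proof -
        have "(L u < L v) = (M1 u < M1 v)" if "u \<in> A" "v \<in> A" for u v
          using gA that en_less_iff[OF fT r1[OF that(1)] r1[OF that(2)]] by simp
        then show ?thesis using rinvD[OF rA, of L M1] M1(2) by blast
      qed
      moreover have "\<Phi>B L"
      proof -
        have "(L u < L v) = (M2 u < M2 v)" if "u \<in> B" "v \<in> B" for u v
          using gB that en_less_iff[OF fT' r2[OF that(1)] r2[OF that(2)]] by simp
        then show ?thesis using rinvD[OF rB, of L M2] M2(2) by blast
      qed
      ultimately show "L \<in> X" unfolding X_def by blast
    qed
  qed
  have "card X = card (TS \<times> YA \<times> YB)" using bij_betw_same_card[OF bij] .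
  also have "\<dots> = (N choose card A) * (card YA * card YB)"
    by (simp add: card_cartesian_product TS_def n_subsets)
  finally show ?thesis unfolding X_def YA_def YB_def N_def V_def .
qed

definition chain_ok :: "('v \<Rightarrow> nat) \<Rightarrow> 'v set \<Rightarrow> ('v \<Rightarrow> nat) \<Rightarrow> bool" where
  "chain_ok \<rho> C L \<longleftrightarrow> (\<forall>u\<in>C. \<forall>v\<in>C. (L u < L v) = (\<rho> u < \<rho> v))"

lemma rinv_chains:
  fixes C :: "'j \<Rightarrow> 'v set" and A :: "'v set"
  assumes "\<And>j. j \<in> J \<Longrightarrow> C j \<subseteq> A"
  shows "rinv A (\<lambda>L. \<forall>j\<in>J. chain_ok \<rho> (C j) L)"
  unfolding rinv_def chain_ok_def
proof (intro allI impI)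
  fix L L' :: "'v \<Rightarrow> nat"
  assume h: "\<forall>u\<in>A. \<forall>v\<in>A. (L u < L v) = (L' u < L' v)"
  have "(L u < L v) = (L' u < L' v)" if "j \<in> J" "u \<in> C j" "v \<in> C j" for j u v
    using h assms[OF that(1)] that(2,3) by blast
  then show "(\<forall>j\<in>J. \<forall>u\<in>C j. \<forall>v\<in>C j. (L u < L v) = (\<rho> u < \<rho> v)) =
             (\<forall>j\<in>J. \<forall>u\<in>C j. \<forall>v\<in>C j. (L' u < L' v) = (\<rho> u < \<rho> v))" by metis
qed

lemma rinv_chain: "C \<subseteq> A \<Longrightarrow> rinv A (chain_ok \<rho> C)"
  using rinv_chains[of "{()}" "\<lambda>_. C" A \<rho>] by simp

lemma chain_one:
  assumes fC: "finite C" and inj: "inj_on \<rho> C"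
  shows "card {L \<in> lab C. chain_ok \<rho> C L} = 1"
proof -
  have "{L \<in> lab C. chain_ok \<rho> C L} = {restrict (rk C \<rho>) C}"
  proof (intro equalityI subsetI)
    fix L assume L: "L \<in> {L \<in> lab C. chain_ok \<rho> C L}"
    then have Ll: "L \<in> lab C" and Lc: "chain_ok \<rho> C L" by auto
    have "L v = restrict (rk C \<rho>) C v" for v
    proof (cases "v \<in> C")
      case True
      have "{u \<in> C. L u \<le> L v} = {u \<in> C. \<rho> u \<le> \<rho> v}"
      proof -
        have "(L u \<le> L v) = (\<rho> u \<le> \<rho> v)" if "u \<in> C" for u
          using Lc that True unfolding chain_ok_def not_less[symmetric] by blast
        then show ?thesis by blast
      qed
      then have "rk C L v = rk C \<rho> v" unfolding rk_def by simp
      then show ?thesis using lab_rk[OF fC Ll True] True by simp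
    next
      case False
      then show ?thesis using labD(3)[OF Ll] by (simp add: extensional_def)
    qed
    then show "L \<in> {restrict (rk C \<rho>) C}" by auto
  next
    fix L assume "L \<in> {restrict (rk C \<rho>) C}"
    then have L: "L = restrict (rk C \<rho>) C" by simp
    have "L \<in> lab C" using rk_in_lab[OF fC inj] L by simp
    moreover have "chain_ok \<rho> C L" unfolding chain_ok_def L using rk_less_iff[OF fC] by simp
    ultimately show "L \<in> {L \<in> lab C. chain_ok \<rho> C L}" by simp
  qed
  then show ?thesis by simp
qed

lemma lab_empty: "lab {} = {\<lambda>_. undefined}"
  unfolding lab_def by (auto simp: bij_betw_def)

lemma chains_count:
  fixes r :: nat and C :: "nat \<Rightarrow> 'v set" and \<rho> :: "'v \<Rightarrow> nat"
  assumes "\<forall>j<r. finite (C j)" "\<forall>j<r. inj_on \<rho> (C j)"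
    and "\<forall>j<r. \<forall>j'<r. j \<noteq> j' \<longrightarrow> C j \<inter> C j' = {}"
  shows "card {L \<in> lab (\<Union>j<r. C j). \<forall>j\<in>{..<r}. chain_ok \<rho> (C j) L}
           = (\<Prod>j<r. (\<Sum>l\<le>j. card (C l)) choose card (C j))
         \<and> card (\<Union>j<r. C j) = (\<Sum>j<r. card (C j))"
  using assms
proof (induction r)
  case 0
  then show ?case by (simp add: lab_empty)
next
  case (Suc r)
  define B where "B = (\<Union>j<r. C j)"
  have IH: "card {L \<in> lab B. \<forall>j\<in>{..<r}. chain_ok \<rho> (C j) L} = (\<Prod>j<r. (\<Sum>l\<le>j. card (C l)) choose card (C j))"
    "card B = (\<Sum>j<r. card (C j))"
    using Suc.IH Suc.prems B_def by auto
  have U: "(\<Union>j<Suc r. C j) = C r \<union> B" unfolding B_def by (auto simp: lessThan_Suc)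
  have fB: "finite B" using Suc.prems(1) B_def by auto
  have fC: "finite (C r)" using Suc.prems(1) by auto
  have disj: "C r \<inter> B = {}"
  proof -
    have "C r \<inter> C j = {}" if "j < r" for j using Suc.prems(3) that by (metis less_Suc_eq less_irrefl_nat)
    then show ?thesis unfolding B_def by blast
  qed
  have P: "(\<forall>j\<in>{..<Suc r}. chain_ok \<rho> (C j) L) = (chain_ok \<rho> (C r) L \<and> (\<forall>j\<in>{..<r}. chain_ok \<rho> (C j) L))" for L
    by (auto simp: lessThan_Suc)
  have cU: "card (C r \<union> B) = card (C r) + (\<Sum>j<r. card (C j))"
    using card_Un_disjoint[OF fC fB disj] IH(2) by simp
  have "card {L \<in> lab (C r \<union> B). chain_ok \<rho> (C r) L \<and> (\<forall>j\<in>{..<r}. chain_ok \<rho> (C j) L)}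
      = (card (C r \<union> B) choose card (C r)) * (card {M \<in> lab (C r). chain_ok \<rho> (C r) M}
          * card {M \<in> lab B. \<forall>j\<in>{..<r}. chain_ok \<rho> (C j) M})"
    by (rule merge_count[OF fC fB disj rinv_chain rinv_chains]) (auto simp: B_def)
  also have "\<dots> = (card (C r \<union> B) choose card (C r)) * (\<Prod>j<r. (\<Sum>l\<le>j. card (C l)) choose card (C j))"
    using chain_one[OF fC] Suc.prems(2) IH(1) by simp
  also have "\<dots> = (\<Prod>j<Suc r. (\<Sum>l\<le>j. card (C l)) choose card (C j))"
  proof -
    have "(\<Sum>l\<le>r. card (C l)) = card (C r) + (\<Sum>j<r. card (C j))"
      by (simp add: lessThan_Suc_atMost[symmetric] add.commute)
    then show ?thesis using cU by simp
  qed
  finally show ?case using U P cU by simp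
qed

lemma inst_split:
  assumes injp: "inj_on \<pi> {1..k}" and h: "h < k"
    and rho: "\<forall>s<k. s \<noteq> h \<longrightarrow> \<rho> (p!s) = \<pi> (Suc s)"
  shows "is_instance k \<pi> L p \<longleftrightarrow>
    (\<forall>v\<in>{p!s |s. s<k \<and> \<pi> (Suc s) < \<pi> (Suc h)}. L v < L (p!h)) \<and>
    (\<forall>v\<in>{p!s |s. s<k \<and> \<pi> (Suc h) < \<pi> (Suc s)}. L (p!h) < L v) \<and>
    chain_ok \<rho> {p!s |s. s<k \<and> \<pi> (Suc s) < \<pi> (Suc h)} L \<and>
    chain_ok \<rho> {p!s |s. s<k \<and> \<pi> (Suc h) < \<pi> (Suc s)} L"
  (is "?I \<longleftrightarrow> (\<forall>v\<in>?B. _) \<and> (\<forall>v\<in>?A. _) \<and> chain_ok \<rho> ?B L \<and> chain_ok \<rho> ?A L")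
proof
  assume I: ?I
  have I': "(L (p!s) < L (p!s')) = (\<pi> (Suc s) < \<pi> (Suc s'))" if "s < k" "s' < k" for s s'
  proof -
    have "\<forall>i<k. \<forall>j<k. (L (p ! i) < L (p ! j)) = (\<pi> (Suc i) < \<pi> (Suc j))"
      using I unfolding is_instance_def .
    then show ?thesis using that by simp
  qed
  have c1: "\<forall>v\<in>?B. L v < L (p!h)" using I' h by auto
  have c2: "\<forall>v\<in>?A. L (p!h) < L v" using I' h by auto
  have c3: "chain_ok \<rho> ?B L"
    unfolding chain_ok_def
  proof (intro ballI)
    fix u v assume "u \<in> ?B" "v \<in> ?B"
    then obtain s s' where "u = p!s" "s < k" "\<pi> (Suc s) < \<pi> (Suc h)" "v = p!s'" "s' < k" "\<pi> (Suc s') < \<pi> (Suc h)"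
      by blast
    moreover then have "s \<noteq> h" "s' \<noteq> h" by auto
    ultimately show "(L u < L v) = (\<rho> u < \<rho> v)" using I' rho by simp
  qed
  have c4: "chain_ok \<rho> ?A L"
    unfolding chain_ok_def
  proof (intro ballI)
    fix u v assume "u \<in> ?A" "v \<in> ?A"
    then obtain s s' where "u = p!s" "s < k" "\<pi> (Suc h) < \<pi> (Suc s)" "v = p!s'" "s' < k" "\<pi> (Suc h) < \<pi> (Suc s')"
      by blast
    moreover then have "s \<noteq> h" "s' \<noteq> h" by auto
    ultimately show "(L u < L v) = (\<rho> u < \<rho> v)" using I' rho by simp
  qed
  show "(\<forall>v\<in>?B. L v < L (p!h)) \<and> (\<forall>v\<in>?A. L (p!h) < L v) \<and> chain_ok \<rho> ?B L \<and> chain_ok \<rho> ?A L"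
    by (intro conjI c1 c2 c3 c4)
next
  assume H: "(\<forall>v\<in>?B. L v < L (p!h)) \<and> (\<forall>v\<in>?A. L (p!h) < L v) \<and> chain_ok \<rho> ?B L \<and> chain_ok \<rho> ?A L"
  have B1: "L (p!s) < L (p!h)" if "s < k" "\<pi> (Suc s) < \<pi> (Suc h)" for s using H that by blast
  have A1: "L (p!h) < L (p!s)" if "s < k" "\<pi> (Suc h) < \<pi> (Suc s)" for s using H that by blast
  have BB: "(L (p!s) < L (p!s')) = (\<rho> (p!s) < \<rho> (p!s'))"
    if "s < k" "\<pi> (Suc s) < \<pi> (Suc h)" "s' < k" "\<pi> (Suc s') < \<pi> (Suc h)" for s s'
  proof -
    have "p!s \<in> ?B" "p!s' \<in> ?B" using that by blast+
    then show ?thesis using H unfolding chain_ok_def by blast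
  qed
  have AA: "(L (p!s) < L (p!s')) = (\<rho> (p!s) < \<rho> (p!s'))"
    if "s < k" "\<pi> (Suc h) < \<pi> (Suc s)" "s' < k" "\<pi> (Suc h) < \<pi> (Suc s')" for s s'
  proof -
    have "p!s \<in> ?A" "p!s' \<in> ?A" using that by blast+
    then show ?thesis using H unfolding chain_ok_def by blast
  qed
  have tri: "\<pi> (Suc s) < \<pi> (Suc h) \<or> \<pi> (Suc h) < \<pi> (Suc s)" if "s < k" "s \<noteq> h" for s
  proof -
    have "\<pi> (Suc s) \<noteq> \<pi> (Suc h)"
    proof
      assume eq: "\<pi> (Suc s) = \<pi> (Suc h)"
      have "Suc s = Suc h" by (rule inj_onD[OF injp eq]) (use that h in auto)
      then show False using that by simp
    qed
    then show ?thesis by linarith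
  qed
  show ?I
    unfolding is_instance_def
  proof (intro allI impI)
    fix s s' assume s: "s < k" and s': "s' < k"
    show "(L (p!s) < L (p!s')) = (\<pi> (Suc s) < \<pi> (Suc s'))"
    proof (cases "s = h")
      case sh: True
      show ?thesis
      proof (cases "s' = h")
        case True then show ?thesis using sh by simp
      next
        case False
        then show ?thesis using tri[OF s' False] B1[OF s'] A1[OF s'] sh by fastforce
      qed
    next
      case sh: False
      show ?thesis
      proof (cases "s' = h")
        case True then show ?thesis using tri[OF s sh] B1[OF s] A1[OF s] by fastforce
      next
        case s'h: False
        have r: "\<rho> (p!s) = \<pi> (Suc s)" "\<rho> (p!s') = \<pi> (Suc s')" using rho s s' sh s'h by auto
        from tri[OF s sh] tri[OF s' s'h] show ?thesis
        proof (elim disjE)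
          assume "\<pi> (Suc s) < \<pi> (Suc h)" "\<pi> (Suc s') < \<pi> (Suc h)"
          then show ?thesis using BB[OF s _ s'] r by simp
        next
          assume a: "\<pi> (Suc s) < \<pi> (Suc h)" "\<pi> (Suc h) < \<pi> (Suc s')"
          then show ?thesis using B1[OF s a(1)] A1[OF s' a(2)] by simp
        next
          assume a: "\<pi> (Suc h) < \<pi> (Suc s)" "\<pi> (Suc s') < \<pi> (Suc h)"
          then show ?thesis using A1[OF s a(1)] B1[OF s' a(2)] by simp
        next
          assume "\<pi> (Suc h) < \<pi> (Suc s)" "\<pi> (Suc h) < \<pi> (Suc s')"
          then show ?thesis using AA[OF s _ s'] r by simp
        qed
      qed
    qed
  qed
qed

lemma finite_down_paths: "finite (down_paths n par k)"
proof -
  have "down_paths n par k \<subseteq> {p. set p \<subseteq> {0..<n} \<and> length p = k}"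
    unfolding down_paths_def by auto
  moreover have "finite {p. set p \<subseteq> {0..<n} \<and> length p = k}"
    by (rule finite_lists_length_eq) simp
  ultimately show ?thesis by (rule finite_subset)
qed

lemma finite_labelings: "finite (labelings n)"
  unfolding labelings_def by (rule finite_subset[of _ "{0..<n} \<rightarrow>\<^sub>E {1..n}"]) (auto intro: finite_PiE)

lemma atleast_sum:
  "card {L \<in> labelings n. S \<subseteq> instances n par k \<sigma> L}
   = (\<Sum>S'\<in>{S'. S \<subseteq> S' \<and> S' \<subseteq> down_paths n par k}. card {L \<in> labelings n. instances n par k \<sigma> L = S'})"
proof -
  define D where "D = down_paths n par k"
  define SS where "SS = {S'. S \<subseteq> S' \<and> S' \<subseteq> D}"
  have fSS: "finite SS" unfolding SS_def D_def
    by (rule finite_subset[of _ "Pow (down_paths n par k)"]) (auto simp: finite_down_paths)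
  have eq: "{L \<in> labelings n. S \<subseteq> instances n par k \<sigma> L} = (\<Union>S'\<in>SS. {L \<in> labelings n. instances n par k \<sigma> L = S'})"
    unfolding SS_def D_def instances_def by auto
  have "card (\<Union>S'\<in>SS. {L \<in> labelings n. instances n par k \<sigma> L = S'})
      = (\<Sum>S'\<in>SS. card {L \<in> labelings n. instances n par k \<sigma> L = S'})"
    by (rule card_UN_disjoint[OF fSS]) (auto simp: finite_labelings)
  then show ?thesis using eq unfolding SS_def D_def by simp
qed

lemma atleast_eq:
  assumes "super_strongly_cfw_equiv k \<pi> \<pi>'" "rooted_forest n par"
  shows "card {L \<in> labelings n. S \<subseteq> instances n par k \<pi> L} = card {L \<in> labelings n. S \<subseteq> instances n par k \<pi>' L}"
  unfolding atleast_sum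
  using assms unfolding super_strongly_cfw_equiv_def by (intro sum.cong) auto

definition parf :: "nat \<Rightarrow> nat \<Rightarrow> nat \<Rightarrow> nat option" where
  "parf k i v = (if v = 0 then None else if v < k then Some (v - 1)
     else if (v - k) mod (k - 1) = 0 then Some (i - 1) else Some (v - 1))"

lemma parf_less: "parf k i v = Some u \<Longrightarrow> 1 \<le> i \<Longrightarrow> i \<le> k \<Longrightarrow> u < v"
  unfolding parf_def by (auto split: if_splits)

lemma rooted: assumes "1 \<le> i" "i \<le> k" shows "rooted_forest n (parf k i)"
  unfolding rooted_forest_def
proof
  show "\<forall>v<n. \<forall>u. parf k i v = Some u \<longrightarrow> u < n" using parf_less assms by fastforce
  have "{(u, v). v < n \<and> parf k i v = Some u} \<subseteq> less_than" using parf_less assms by auto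
  then show "acyclic {(u, v). v < n \<and> parf k i v = Some u}"
    by (intro wf_acyclic wf_subset[OF wf_less_than])
qed

definition Qp :: "nat \<Rightarrow> nat \<Rightarrow> nat \<Rightarrow> nat list" where
  "Qp k i j = (i - 1) # map (\<lambda>t. k + j * (k - 1) + t) [0..<k - 1]"

lemma len_Qp: "1 \<le> k \<Longrightarrow> length (Qp k i j) = k"
  unfolding Qp_def by simp

lemma Qp_nth0: "Qp k i j ! 0 = i - 1" unfolding Qp_def by simp

lemma Qp_nthS: "Suc t < k \<Longrightarrow> Qp k i j ! Suc t = k + j * (k - 1) + t"
  unfolding Qp_def by simp

lemma Qp_down:
  assumes k2: "2 \<le> k" and i: "1 \<le> i" "i \<le> k" and j: "j < m"
  shows "Qp k i j \<in> down_paths (k + m * (k - 1)) (parf k i) k"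
  unfolding down_paths_def
proof (intro CollectI conjI allI impI)
  show "length (Qp k i j) = k" using len_Qp k2 by simp
  have "Suc j * (k - 1) \<le> m * (k - 1)" using j by (intro mult_le_mono1) simp
  then have bnd: "k + j * (k - 1) + t < k + m * (k - 1)" if "t < k - 1" for t using that by simp
  show "set (Qp k i j) \<subseteq> {0..<k + m * (k - 1)}"
  proof
    fix v assume "v \<in> set (Qp k i j)"
    then have "v = i - 1 \<or> (k + j * (k - 1) \<le> v \<and> v < k + j * (k - 1) + (k - 1))" unfolding Qp_def by auto
    moreover have "k + j * (k - 1) + (k - 1) \<le> k + m * (k - 1)" using \<open>Suc j * (k - 1) \<le> m * (k - 1)\<close> by simp
    ultimately show "v \<in> {0..<k + m * (k - 1)}" using i by auto
  qed
  fix s assume s: "Suc s < k"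
  have v: "Qp k i j ! Suc s = k + j * (k - 1) + s" using Qp_nthS[OF s] .
  have md: "(k + j * (k - 1) + s - k) mod (k - 1) = s" using s by simp
  show "parf k i (Qp k i j ! Suc s) = Some (Qp k i j ! s)"
  proof (cases s)
    case 0
    then show ?thesis using v md k2 by (simp add: parf_def Qp_nth0)
  next
    case (Suc t)
    then have "Qp k i j ! s = k + j * (k - 1) + t" using Qp_nthS s by simp
    then show ?thesis using v md k2 Suc by (simp add: parf_def)
  qed
qed

lemma P_down:
  assumes "1 \<le> k"
  shows "[0..<k] \<in> down_paths (k + m * (k - 1)) (parf k i) k"
  unfolding down_paths_def by (auto simp: parf_def)

definition pth :: "nat \<Rightarrow> nat \<Rightarrow> nat \<Rightarrow> nat \<Rightarrow> nat list" where
  "pth k i m j = (if j < m then Qp k i j else [0..<k])"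

definition hh :: "nat \<Rightarrow> nat \<Rightarrow> nat \<Rightarrow> nat" where
  "hh i m j = (if j < m then 0 else i - 1)"

definition rho :: "nat \<Rightarrow> (nat \<Rightarrow> nat) \<Rightarrow> nat \<Rightarrow> nat" where
  "rho k \<pi> v = \<pi> (if v < k then Suc v else (v - k) mod (k - 1) + 2)"

lemma pth_x: "1 \<le> i \<Longrightarrow> i \<le> k \<Longrightarrow> pth k i m j ! hh i m j = i - 1"
  unfolding pth_def hh_def by (auto simp: Qp_nth0)

lemma pth_rho:
  assumes k2: "2 \<le> k" and s: "s < k" "s \<noteq> hh i m j"
  shows "rho k \<pi> (pth k i m j ! s) = \<pi> (Suc s)"
proof (cases "j < m")
  case True
  then obtain t where t: "s = Suc t" using s unfolding hh_def by (cases s) auto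
  then have "pth k i m j ! s = k + j * (k - 1) + t" using True Qp_nthS s unfolding pth_def by simp
  moreover have "(k + j * (k - 1) + t - k) mod (k - 1) = t" using s t by simp
  ultimately show ?thesis unfolding rho_def using t by simp
next
  case False
  then show ?thesis using s unfolding pth_def rho_def by simp
qed

definition CB :: "nat \<Rightarrow> nat \<Rightarrow> nat \<Rightarrow> (nat \<Rightarrow> nat) \<Rightarrow> nat \<Rightarrow> nat set" where
  "CB k i m \<pi> j = {pth k i m j ! s |s. s < k \<and> \<pi> (Suc s) < \<pi> (Suc (hh i m j))}"

definition CA :: "nat \<Rightarrow> nat \<Rightarrow> nat \<Rightarrow> (nat \<Rightarrow> nat) \<Rightarrow> nat \<Rightarrow> nat set" where
  "CA k i m \<pi> j = {pth k i m j ! s |s. s < k \<and> \<pi> (Suc (hh i m j)) < \<pi> (Suc s)}"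

lemma CB_Q:
  assumes "j < m"
  shows "CB k i m \<pi> j = (\<lambda>t. k + j * (k - 1) + t) ` {t. t < k - 1 \<and> \<pi> (t + 2) < \<pi> 1}"
proof (intro equalityI subsetI)
  fix v assume "v \<in> CB k i m \<pi> j"
  then have "v \<in> {Qp k i j ! s |s. s < k \<and> \<pi> (Suc s) < \<pi> (Suc 0)}" using assms unfolding CB_def pth_def hh_def by simp
  then obtain s where s: "v = Qp k i j ! s" "s < k" "\<pi> (Suc s) < \<pi> 1" by auto
  then obtain t where t: "s = Suc t" by (cases s) auto
  then have "v = k + j * (k - 1) + t" using s Qp_nthS by simp
  moreover have "t < k - 1" "\<pi> (t + 2) < \<pi> 1" using s t by auto
  ultimately show "v \<in> (\<lambda>t. k + j * (k - 1) + t) ` {t. t < k - 1 \<and> \<pi> (t + 2) < \<pi> 1}" by blast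
next
  fix v assume "v \<in> (\<lambda>t. k + j * (k - 1) + t) ` {t. t < k - 1 \<and> \<pi> (t + 2) < \<pi> 1}"
  then obtain t where t: "v = k + j * (k - 1) + t" "t < k - 1" "\<pi> (t + 2) < \<pi> 1" by blast
  then have "v = pth k i m j ! Suc t" "Suc t < k" "\<pi> (Suc (Suc t)) < \<pi> (Suc (hh i m j))"
    using assms Qp_nthS[of t k i j] unfolding pth_def hh_def by auto
  then show "v \<in> CB k i m \<pi> j" unfolding CB_def by blast
qed

lemma CA_Q:
  assumes "j < m"
  shows "CA k i m \<pi> j = (\<lambda>t. k + j * (k - 1) + t) ` {t. t < k - 1 \<and> \<pi> 1 < \<pi> (t + 2)}"
proof (intro equalityI subsetI)
  fix v assume "v \<in> CA k i m \<pi> j"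
  then have "v \<in> {Qp k i j ! s |s. s < k \<and> \<pi> (Suc 0) < \<pi> (Suc s)}" using assms unfolding CA_def pth_def hh_def by simp
  then obtain s where s: "v = Qp k i j ! s" "s < k" "\<pi> 1 < \<pi> (Suc s)" by auto
  then obtain t where t: "s = Suc t" by (cases s) auto
  then have "v = k + j * (k - 1) + t" using s Qp_nthS by simp
  moreover have "t < k - 1" "\<pi> 1 < \<pi> (t + 2)" using s t by auto
  ultimately show "v \<in> (\<lambda>t. k + j * (k - 1) + t) ` {t. t < k - 1 \<and> \<pi> 1 < \<pi> (t + 2)}" by blast
next
  fix v assume "v \<in> (\<lambda>t. k + j * (k - 1) + t) ` {t. t < k - 1 \<and> \<pi> 1 < \<pi> (t + 2)}"
  then obtain t where t: "v = k + j * (k - 1) + t" "t < k - 1" "\<pi> 1 < \<pi> (t + 2)" by blast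
  then have "v = pth k i m j ! Suc t" "Suc t < k" "\<pi> (Suc (hh i m j)) < \<pi> (Suc (Suc t))"
    using assms Qp_nthS[of t k i j] unfolding pth_def hh_def by auto
  then show "v \<in> CA k i m \<pi> j" unfolding CA_def by blast
qed

lemma CB_P:
  assumes "\<not> j < m" "1 \<le> i"
  shows "CB k i m \<pi> j = {v. v < k \<and> \<pi> (Suc v) < \<pi> i}"
proof (intro equalityI subsetI)
  fix v assume "v \<in> CB k i m \<pi> j"
  then show "v \<in> {v. v < k \<and> \<pi> (Suc v) < \<pi> i}" using assms unfolding CB_def pth_def hh_def by auto
next
  fix v assume v: "v \<in> {v. v < k \<and> \<pi> (Suc v) < \<pi> i}"
  have "v = [0..<k] ! v \<and> v < k \<and> \<pi> (Suc v) < \<pi> i" using v assms by simp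
  then have "\<exists>s. v = [0..<k] ! s \<and> s < k \<and> \<pi> (Suc s) < \<pi> i" by blast
  then show "v \<in> CB k i m \<pi> j" using assms unfolding CB_def pth_def hh_def by simp
qed

lemma CA_P:
  assumes "\<not> j < m" "1 \<le> i"
  shows "CA k i m \<pi> j = {v. v < k \<and> \<pi> i < \<pi> (Suc v)}"
proof (intro equalityI subsetI)
  fix v assume "v \<in> CA k i m \<pi> j"
  then show "v \<in> {v. v < k \<and> \<pi> i < \<pi> (Suc v)}" using assms unfolding CA_def pth_def hh_def by auto
next
  fix v assume v: "v \<in> {v. v < k \<and> \<pi> i < \<pi> (Suc v)}"
  have "v = [0..<k] ! v \<and> v < k \<and> \<pi> i < \<pi> (Suc v)" using v assms by simp
  then have "\<exists>s. v = [0..<k] ! s \<and> s < k \<and> \<pi> i < \<pi> (Suc s)" by blast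
  then show "v \<in> CA k i m \<pi> j" using assms unfolding CA_def pth_def hh_def by simp
qed

lemma pat_inj: "pattern k \<pi> \<Longrightarrow> inj_on \<pi> {1..k}"
  unfolding pattern_def bij_betw_def by simp

lemma pat_img: "pattern k \<pi> \<Longrightarrow> \<pi> ` {1..k} = {1..k}"
  unfolding pattern_def bij_betw_def by simp

lemma pat_card:
  assumes pat: "pattern k \<pi>" and y: "y \<in> {1..k}"
  shows "card {s\<in>{1..k}. \<pi> s < \<pi> y} = \<pi> y - 1" "card {s\<in>{1..k}. \<pi> y < \<pi> s} = k - \<pi> y"
proof -
  have inj: "inj_on \<pi> {1..k}" using pat_inj[OF pat] .
  have img: "\<pi> ` {1..k} = {1..k}" using pat_img[OF pat] .
  have py: "\<pi> y \<in> {1..k}" using img y by blast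
  have "\<pi> ` {s\<in>{1..k}. \<pi> s < \<pi> y} = {z\<in>{1..k}. z < \<pi> y}"
  proof (intro equalityI subsetI)
    fix z assume "z \<in> \<pi> ` {s\<in>{1..k}. \<pi> s < \<pi> y}"
    then obtain s where s: "s \<in> {1..k}" "\<pi> s < \<pi> y" "z = \<pi> s" by blast
    then have "z \<in> \<pi> ` {1..k}" by blast
    then show "z \<in> {z\<in>{1..k}. z < \<pi> y}" using s img by simp
  next
    fix z assume z: "z \<in> {z\<in>{1..k}. z < \<pi> y}"
    then have "z \<in> \<pi> ` {1..k}" using img by simp
    then obtain s where s: "s \<in> {1..k}" "z = \<pi> s" by blast
    then show "z \<in> \<pi> ` {s\<in>{1..k}. \<pi> s < \<pi> y}" using z by blast
  qed
  also have "\<dots> = {1..<\<pi> y}" using py by auto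
  finally have e1: "\<pi> ` {s\<in>{1..k}. \<pi> s < \<pi> y} = {1..<\<pi> y}" .
  have "card {s\<in>{1..k}. \<pi> s < \<pi> y} = card (\<pi> ` {s\<in>{1..k}. \<pi> s < \<pi> y})"
    by (rule card_image[symmetric], rule inj_on_subset[OF inj]) auto
  then show "card {s\<in>{1..k}. \<pi> s < \<pi> y} = \<pi> y - 1" using e1 by simp
  have "\<pi> ` {s\<in>{1..k}. \<pi> y < \<pi> s} = {z\<in>{1..k}. \<pi> y < z}"
  proof (intro equalityI subsetI)
    fix z assume "z \<in> \<pi> ` {s\<in>{1..k}. \<pi> y < \<pi> s}"
    then obtain s where s: "s \<in> {1..k}" "\<pi> y < \<pi> s" "z = \<pi> s" by blast
    then have "z \<in> \<pi> ` {1..k}" by blast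
    then show "z \<in> {z\<in>{1..k}. \<pi> y < z}" using s img by simp
  next
    fix z assume z: "z \<in> {z\<in>{1..k}. \<pi> y < z}"
    then have "z \<in> \<pi> ` {1..k}" using img by simp
    then obtain s where s: "s \<in> {1..k}" "z = \<pi> s" by blast
    then show "z \<in> \<pi> ` {s\<in>{1..k}. \<pi> y < \<pi> s}" using z by blast
  qed
  also have "\<dots> = {\<pi> y<..k}" using py by auto
  finally have e2: "\<pi> ` {s\<in>{1..k}. \<pi> y < \<pi> s} = {\<pi> y<..k}" .
  have "card {s\<in>{1..k}. \<pi> y < \<pi> s} = card (\<pi> ` {s\<in>{1..k}. \<pi> y < \<pi> s})"
    by (rule card_image[symmetric], rule inj_on_subset[OF inj]) auto
  then show "card {s\<in>{1..k}. \<pi> y < \<pi> s} = k - \<pi> y" using e2 by simp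
qed

lemma card_tQ:
  assumes pat: "pattern k \<pi>" and k2: "2 \<le> k"
  shows "card {t. t < k - 1 \<and> \<pi> (t + 2) < \<pi> 1} = \<pi> 1 - 1"
    "card {t. t < k - 1 \<and> \<pi> 1 < \<pi> (t + 2)} = k - \<pi> 1"
proof -
  have y: "(1::nat) \<in> {1..k}" using k2 by simp
  have e1: "(\<lambda>t. t + 2) ` {t. t < k - 1 \<and> \<pi> (t + 2) < \<pi> 1} = {s\<in>{1..k}. \<pi> s < \<pi> 1}"
  proof (intro equalityI subsetI)
    fix s assume "s \<in> {s\<in>{1..k}. \<pi> s < \<pi> 1}"
    then have s: "1 \<le> s" "s \<le> k" "\<pi> s < \<pi> 1" by auto
    then have "s \<noteq> 1" by auto
    then have "s = (s - 2) + 2" "s - 2 < k - 1" using s by auto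
    then show "s \<in> (\<lambda>t. t + 2) ` {t. t < k - 1 \<and> \<pi> (t + 2) < \<pi> 1}" using s
      by (intro image_eqI[of _ _ "s - 2"]) auto
  qed auto
  have e2: "(\<lambda>t. t + 2) ` {t. t < k - 1 \<and> \<pi> 1 < \<pi> (t + 2)} = {s\<in>{1..k}. \<pi> 1 < \<pi> s}"
  proof (intro equalityI subsetI)
    fix s assume "s \<in> {s\<in>{1..k}. \<pi> 1 < \<pi> s}"
    then have s: "1 \<le> s" "s \<le> k" "\<pi> 1 < \<pi> s" by auto
    then have "s \<noteq> 1" by auto
    then have "s = (s - 2) + 2" "s - 2 < k - 1" using s by auto
    then show "s \<in> (\<lambda>t. t + 2) ` {t. t < k - 1 \<and> \<pi> 1 < \<pi> (t + 2)}" using s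
      by (intro image_eqI[of _ _ "s - 2"]) auto
  qed auto
  have i: "inj (\<lambda>t::nat. t + 2)" by (auto simp: inj_on_def)
  have "card {t. t < k - 1 \<and> \<pi> (t + 2) < \<pi> 1} = card ((\<lambda>t. t + 2) ` {t. t < k - 1 \<and> \<pi> (t + 2) < \<pi> 1})"
    by (rule card_image[symmetric]) (simp add: inj_on_def)
  then show "card {t. t < k - 1 \<and> \<pi> (t + 2) < \<pi> 1} = \<pi> 1 - 1" using e1 pat_card(1)[OF pat y] by simp
  have "card {t. t < k - 1 \<and> \<pi> 1 < \<pi> (t + 2)} = card ((\<lambda>t. t + 2) ` {t. t < k - 1 \<and> \<pi> 1 < \<pi> (t + 2)})"
    by (rule card_image[symmetric]) (simp add: inj_on_def)
  then show "card {t. t < k - 1 \<and> \<pi> 1 < \<pi> (t + 2)} = k - \<pi> 1" using e2 pat_card(2)[OF pat y] by simp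
qed

lemma card_vP:
  assumes pat: "pattern k \<pi>" and i: "i \<in> {1..k}"
  shows "card {v. v < k \<and> \<pi> (Suc v) < \<pi> i} = \<pi> i - 1"
    "card {v. v < k \<and> \<pi> i < \<pi> (Suc v)} = k - \<pi> i"
proof -
  have e1: "Suc ` {v. v < k \<and> \<pi> (Suc v) < \<pi> i} = {s\<in>{1..k}. \<pi> s < \<pi> i}"
  proof (intro equalityI subsetI)
    fix s assume "s \<in> {s\<in>{1..k}. \<pi> s < \<pi> i}"
    then show "s \<in> Suc ` {v. v < k \<and> \<pi> (Suc v) < \<pi> i}"
      by (intro image_eqI[of _ _ "s - 1"]) auto
  qed auto
  have e2: "Suc ` {v. v < k \<and> \<pi> i < \<pi> (Suc v)} = {s\<in>{1..k}. \<pi> i < \<pi> s}"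
  proof (intro equalityI subsetI)
    fix s assume "s \<in> {s\<in>{1..k}. \<pi> i < \<pi> s}"
    then show "s \<in> Suc ` {v. v < k \<and> \<pi> i < \<pi> (Suc v)}"
      by (intro image_eqI[of _ _ "s - 1"]) auto
  qed auto
  have "card {v. v < k \<and> \<pi> (Suc v) < \<pi> i} = card (Suc ` {v. v < k \<and> \<pi> (Suc v) < \<pi> i})"
    by (rule card_image[symmetric]) (simp add: inj_on_def)
  then show "card {v. v < k \<and> \<pi> (Suc v) < \<pi> i} = \<pi> i - 1" using e1 pat_card(1)[OF pat i] by simp
  have "card {v. v < k \<and> \<pi> i < \<pi> (Suc v)} = card (Suc ` {v. v < k \<and> \<pi> i < \<pi> (Suc v)})"
    by (rule card_image[symmetric]) (simp add: inj_on_def)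
  then show "card {v. v < k \<and> \<pi> i < \<pi> (Suc v)} = k - \<pi> i" using e2 pat_card(2)[OF pat i] by simp
qed

lemma prod_eval:
  fixes g :: "nat \<Rightarrow> nat"
  assumes "\<forall>j<m. g j = c" "g m = a"
  shows "(\<Prod>j<Suc m. (\<Sum>l\<le>j. g l) choose g j) = (\<Prod>j<m. (Suc j * c) choose c) * ((m * c + a) choose a)"
proof -
  have s1: "(\<Sum>l\<le>j. g l) = Suc j * c" if "j < m" for j
  proof -
    have "(\<Sum>l\<le>j. g l) = (\<Sum>l\<le>j. c)" using assms(1) that by (intro sum.cong) auto
    then show ?thesis by simp
  qed
  have s2: "(\<Sum>l\<le>m. g l) = m * c + a"
  proof -
    have "(\<Sum>l\<le>m. g l) = (\<Sum>l<m. g l) + g m" by (simp add: lessThan_Suc_atMost[symmetric])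
    also have "(\<Sum>l<m. g l) = (\<Sum>l<m. c)" using assms(1) by (intro sum.cong) auto
    finally show ?thesis using assms(2) by simp
  qed
  have "(\<Prod>j<Suc m. (\<Sum>l\<le>j. g l) choose g j) = (\<Prod>j<m. (\<Sum>l\<le>j. g l) choose g j) * ((\<Sum>l\<le>m. g l) choose g m)"
    by simp
  also have "(\<Prod>j<m. (\<Sum>l\<le>j. g l) choose g j) = (\<Prod>j<m. (Suc j * c) choose c)"
    using s1 assms(1) by (intro prod.cong) auto
  finally show ?thesis using s2 assms(2) by simp
qed

lemma CB_card:
  assumes pat: "pattern k \<pi>" and k2: "2 \<le> k" and i: "1 \<le> i" "i \<le> k"
  shows "card (CB k i m \<pi> j) = (if j < m then \<pi> 1 - 1 else \<pi> i - 1)"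
    "card (CA k i m \<pi> j) = (if j < m then k - \<pi> 1 else k - \<pi> i)"
proof -
  have inj: "inj_on (\<lambda>t. k + j * (k - 1) + t) S" for S by (simp add: inj_on_def)
  show "card (CB k i m \<pi> j) = (if j < m then \<pi> 1 - 1 else \<pi> i - 1)"
  proof (cases "j < m")
    case True
    then show ?thesis using CB_Q[OF True] card_image[OF inj] card_tQ[OF pat k2] by simp
  next
    case False
    then show ?thesis using CB_P[OF False i(1)] card_vP[OF pat] i by simp
  qed
  show "card (CA k i m \<pi> j) = (if j < m then k - \<pi> 1 else k - \<pi> i)"
  proof (cases "j < m")
    case True
    then show ?thesis using CA_Q[OF True] card_image[OF inj] card_tQ[OF pat k2] by simp
  next
    case False
    then show ?thesis using CA_P[OF False i(1)] card_vP[OF pat] i by simp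
  qed
qed

lemma CB_fin: "finite (CB k i m \<pi> j)" "finite (CA k i m \<pi> j)"
proof -
  show "finite (CB k i m \<pi> j)" unfolding CB_def
    by (rule finite_subset[of _ "(\<lambda>s. pth k i m j ! s) ` {..<k}"]) auto
  show "finite (CA k i m \<pi> j)" unfolding CA_def
    by (rule finite_subset[of _ "(\<lambda>s. pth k i m j ! s) ` {..<k}"]) auto
qed

lemma blkQ:
  assumes "j < m" "v \<in> CB k i m \<pi> j \<union> CA k i m \<pi> j"
  shows "k + j * (k - 1) \<le> v \<and> v < k + Suc j * (k - 1)"
  using assms CB_Q[OF assms(1)] CA_Q[OF assms(1)] by auto

lemma blkP:
  assumes "\<not> j < m" "1 \<le> i" "v \<in> CB k i m \<pi> j \<union> CA k i m \<pi> j"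
  shows "v < k \<and> v \<noteq> i - 1"
  using assms CB_P[OF assms(1,2)] CA_P[OF assms(1,2)] by auto

lemma blk_disj:
  assumes i: "1 \<le> i" and j: "j \<le> m" "j' \<le> m" "j \<noteq> j'"
    and v: "v \<in> CB k i m \<pi> j \<union> CA k i m \<pi> j" "v \<in> CB k i m \<pi> j' \<union> CA k i m \<pi> j'"
  shows False
proof -
  have gen: False if "a < b" "b \<le> m" "v \<in> CB k i m \<pi> a \<union> CA k i m \<pi> a" "v \<in> CB k i m \<pi> b \<union> CA k i m \<pi> b" for a b
  proof -
    have am: "a < m" using that by simp
    have a: "k + a * (k - 1) \<le> v \<and> v < k + Suc a * (k - 1)" using blkQ[OF am that(3)] .
    show False
    proof (cases "b < m")
      case True
      have "k + b * (k - 1) \<le> v" using blkQ[OF True that(4)] by simp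
      moreover have "Suc a * (k - 1) \<le> b * (k - 1)" using that(1) by (intro mult_le_mono1) simp
      ultimately show False using a by simp
    next
      case False
      then show False using blkP[OF False i that(4)] a by simp
    qed
  qed
  show False
  proof (cases "j < j'")
    case True show False by (rule gen[OF True j(2) v])
  next
    case False then have "j' < j" using j(3) by simp
    then show False using gen[OF _ j(1) v(2) v(1)] by simp
  qed
qed

lemma BA_disj:
  assumes pat: "pattern k \<pi>" and i: "1 \<le> i"
  shows "CB k i m \<pi> j \<inter> CA k i m \<pi> j = {}"
proof (cases "j < m")
  case True
  show ?thesis
  proof (rule ccontr)
    assume "CB k i m \<pi> j \<inter> CA k i m \<pi> j \<noteq> {}"
    then obtain v where "v \<in> CB k i m \<pi> j" "v \<in> CA k i m \<pi> j" by blast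
    then obtain t t' where "v = k + j * (k - 1) + t" "\<pi> (t + 2) < \<pi> 1"
       "v = k + j * (k - 1) + t'" "\<pi> 1 < \<pi> (t' + 2)" using CB_Q[OF True] CA_Q[OF True] by auto
    then show False by simp
  qed
next
  case False
  then show ?thesis using CB_P[OF False i] CA_P[OF False i] by auto
qed

lemma x_notin:
  assumes "1 \<le> i" "i \<le> k"
  shows "i - 1 \<notin> CB k i m \<pi> j \<union> CA k i m \<pi> j"
proof
  assume h: "i - 1 \<in> CB k i m \<pi> j \<union> CA k i m \<pi> j"
  show False
  proof (cases "j < m")
    case True
    have "k + j * (k - 1) \<le> i - 1" using blkQ[OF True h] by simp
    then have "k \<le> i - 1" by (rule order_trans[OF le_add1])
    then show False using assms by linarith
  next
    case False then show False using blkP[OF False assms(1) h] by simp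
  qed
qed

lemma rho_inj:
  assumes pat: "pattern k \<pi>" and k2: "2 \<le> k" and i: "1 \<le> i" "i \<le> k"
  shows "inj_on (rho k \<pi>) (CB k i m \<pi> j)" "inj_on (rho k \<pi>) (CA k i m \<pi> j)"
proof -
  have injp: "inj_on \<pi> {1..k}" using pat_inj[OF pat] .
  have Q: "inj_on (rho k \<pi>) ((\<lambda>t. k + j * (k - 1) + t) ` {t. t < k - 1 \<and> P t})" for P
  proof (rule inj_on_imageI, rule inj_onI)
    fix t t' assume t: "t \<in> {t. t < k - 1 \<and> P t}" "t' \<in> {t. t < k - 1 \<and> P t}"
      and e: "(rho k \<pi> \<circ> (\<lambda>t. k + j * (k - 1) + t)) t = (rho k \<pi> \<circ> (\<lambda>t. k + j * (k - 1) + t)) t'"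
    have "(k + j * (k - 1) + t - k) mod (k - 1) = t" "(k + j * (k - 1) + t' - k) mod (k - 1) = t'"
      using t by auto
    then have "\<pi> (t + 2) = \<pi> (t' + 2)" using e k2 unfolding rho_def by simp
    then have "t + 2 = t' + 2" by (rule inj_onD[OF injp]) (use t k2 in auto)
    then show "t = t'" by simp
  qed
  have P: "inj_on (rho k \<pi>) {v. v < k \<and> R v}" for R
  proof (rule inj_onI)
    fix u v assume uv: "u \<in> {v. v < k \<and> R v}" "v \<in> {v. v < k \<and> R v}" "rho k \<pi> u = rho k \<pi> v"
    then have "\<pi> (Suc u) = \<pi> (Suc v)" unfolding rho_def by simp
    then have "Suc u = Suc v" by (rule inj_onD[OF injp]) (use uv in auto)
    then show "u = v" by simp
  qed
  show "inj_on (rho k \<pi>) (CB k i m \<pi> j)"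
  proof (cases "j < m")
    case True then show ?thesis using CB_Q[OF True] Q by simp
  next
    case False then show ?thesis using CB_P[OF False i(1)] P by simp
  qed
  show "inj_on (rho k \<pi>) (CA k i m \<pi> j)"
  proof (cases "j < m")
    case True then show ?thesis using CA_Q[OF True] Q by simp
  next
    case False then show ?thesis using CA_P[OF False i(1)] P by simp
  qed
qed

lemma cover:
  assumes pat: "pattern k \<pi>" and k2: "2 \<le> k" and i: "1 \<le> i" "i \<le> k"
  shows "{0..<k + m * (k - 1)} = insert (i - 1) ((\<Union>j<Suc m. CB k i m \<pi> j) \<union> (\<Union>j<Suc m. CA k i m \<pi> j))"
proof (intro equalityI subsetI)
  have injp: "inj_on \<pi> {1..k}" using pat_inj[OF pat] .
  fix v assume "v \<in> {0..<k + m * (k - 1)}"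
  then have v: "v < k + m * (k - 1)" by simp
  show "v \<in> insert (i - 1) ((\<Union>j<Suc m. CB k i m \<pi> j) \<union> (\<Union>j<Suc m. CA k i m \<pi> j))"
  proof (cases "v < k")
    case True
    show ?thesis
    proof (cases "v = i - 1")
      case True then show ?thesis by simp
    next
      case False
      then have "Suc v \<noteq> i" using i by auto
      have ne: "\<pi> (Suc v) \<noteq> \<pi> i"
      proof
        assume eq: "\<pi> (Suc v) = \<pi> i"
        have "Suc v = i" by (rule inj_onD[OF injp eq]) (use \<open>v < k\<close> i in auto)
        then show False using \<open>Suc v \<noteq> i\<close> by simp
      qed
      have nm: "\<not> m < m" by simp
      have "v \<in> CB k i m \<pi> m \<or> v \<in> CA k i m \<pi> m"
      proof (cases "\<pi> (Suc v) < \<pi> i")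
        case True then show ?thesis using CB_P[OF nm i(1)] \<open>v < k\<close> by simp
      next
        case False then have "\<pi> i < \<pi> (Suc v)" using ne by simp
        then show ?thesis using CA_P[OF nm i(1)] \<open>v < k\<close> by simp
      qed
      moreover have "m \<in> {..<Suc m}" by simp
      ultimately show ?thesis by (elim disjE) (auto intro!: UN_I[of m])
    qed
  next
    case False
    define K where "K = k - 1"
    have K0: "0 < K" using k2 K_def by simp
    define j where "j = (v - k) div K"
    define t where "t = (v - k) mod K"
    have vjt: "v = k + j * K + t" using False unfolding j_def t_def by simp
    have tK: "t < K" using K0 t_def by simp
    have "j * K + t < m * K" using v vjt K_def by simp
    then have "j * K < m * K" by linarith
    then have jm: "j < m" using K0 by simp
    have ne: "\<pi> (t + 2) \<noteq> \<pi> 1"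
    proof
      assume eq: "\<pi> (t + 2) = \<pi> 1"
      have "t + 2 = 1" by (rule inj_onD[OF injp eq]) (use tK K_def in auto)
      then show False by simp
    qed
    have tK': "t < k - 1" using tK K_def by simp
    have vjt': "v = k + j * (k - 1) + t" using vjt K_def by simp
    have "v \<in> CB k i m \<pi> j \<or> v \<in> CA k i m \<pi> j"
    proof (cases "\<pi> (t + 2) < \<pi> 1")
      case True
      then have "v \<in> (\<lambda>t. k + j * (k - 1) + t) ` {t. t < k - 1 \<and> \<pi> (t + 2) < \<pi> 1}"
        using tK' vjt' by blast
      then show ?thesis using CB_Q[OF jm] by simp
    next
      case False then have "\<pi> 1 < \<pi> (t + 2)" using ne by simp
      then have "v \<in> (\<lambda>t. k + j * (k - 1) + t) ` {t. t < k - 1 \<and> \<pi> 1 < \<pi> (t + 2)}"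
        using tK' vjt' by blast
      then show ?thesis using CA_Q[OF jm] by simp
    qed
    moreover have "j \<in> {..<Suc m}" using jm by simp
    ultimately show ?thesis by (elim disjE) (auto intro!: UN_I[of j])
  qed
next
  fix v assume v: "v \<in> insert (i - 1) ((\<Union>j<Suc m. CB k i m \<pi> j) \<union> (\<Union>j<Suc m. CA k i m \<pi> j))"
  show "v \<in> {0..<k + m * (k - 1)}"
  proof (cases "v = i - 1")
    case True then show ?thesis using i by simp
  next
    case False
    then have "v \<in> (\<Union>j<Suc m. CB k i m \<pi> j) \<union> (\<Union>j<Suc m. CA k i m \<pi> j)" using v by simp
    then obtain j where j: "j < Suc m" "v \<in> CB k i m \<pi> j \<union> CA k i m \<pi> j" by (elim UnE UN_E) auto
    show ?thesis
    proof (cases "j < m")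
      case True
      have "v < k + Suc j * (k - 1)" using blkQ[OF True j(2)] by simp
      moreover have "Suc j * (k - 1) \<le> m * (k - 1)" using True by (intro mult_le_mono1) simp
      ultimately show ?thesis by simp
    next
      case False
      then show ?thesis using blkP[OF False i(1) j(2)] by simp
    qed
  qed
qed

lemma count_formula:
  assumes pat: "pattern k \<pi>" and k2: "2 \<le> k" and i: "1 \<le> i" "i \<le> k"
  shows "card {L \<in> labelings (k + m * (k - 1)).
            pth k i m ` {..<Suc m} \<subseteq> instances (k + m * (k - 1)) (parf k i) k \<pi> L}
     = ((\<Prod>j<m. (Suc j * (\<pi> 1 - 1)) choose (\<pi> 1 - 1)) * ((m * (\<pi> 1 - 1) + (\<pi> i - 1)) choose (\<pi> i - 1)))
       * ((\<Prod>j<m. (Suc j * (k - \<pi> 1)) choose (k - \<pi> 1)) * ((m * (k - \<pi> 1) + (k - \<pi> i)) choose (k - \<pi> i)))"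
proof -
  define n where "n = k + m * (k - 1)"
  define x where "x = i - 1"
  define B where "B = (\<Union>j<Suc m. CB k i m \<pi> j)"
  define A where "A = (\<Union>j<Suc m. CA k i m \<pi> j)"
  define \<Phi>B where "\<Phi>B = (\<lambda>L. \<forall>j\<in>{..<Suc m}. chain_ok (rho k \<pi>) (CB k i m \<pi> j) L)"
  define \<Phi>A where "\<Phi>A = (\<lambda>L. \<forall>j\<in>{..<Suc m}. chain_ok (rho k \<pi>) (CA k i m \<pi> j) L)"
  have dp: "pth k i m j \<in> down_paths n (parf k i) k" for j
  proof (cases "j < m")
    case True then show ?thesis using Qp_down[OF k2 i True] unfolding pth_def n_def by simp
  next
    case False then show ?thesis using P_down[of k m i] k2 unfolding pth_def n_def by simp
  qed
  have V: "{0..<n} = insert x (B \<union> A)" unfolding n_def x_def B_def A_def by (rule cover[OF pat k2 i])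
  have lab_eq: "labelings n = lab (insert x (B \<union> A))"
    unfolding labelings_def lab_def V[symmetric] by simp
  have ij: "is_instance k \<pi> L (pth k i m j) \<longleftrightarrow>
      (\<forall>v\<in>CB k i m \<pi> j. L v < L x) \<and> (\<forall>v\<in>CA k i m \<pi> j. L x < L v) \<and>
      chain_ok (rho k \<pi>) (CB k i m \<pi> j) L \<and> chain_ok (rho k \<pi>) (CA k i m \<pi> j) L" for j L
  proof -
    have h: "hh i m j < k" using i k2 unfolding hh_def by auto
    have r: "\<forall>s<k. s \<noteq> hh i m j \<longrightarrow> rho k \<pi> (pth k i m j ! s) = \<pi> (Suc s)"
      using pth_rho[OF k2] by blast
    have px: "pth k i m j ! hh i m j = x" using pth_x[OF i] x_def by simp
    show ?thesis using inst_split[OF pat_inj[OF pat] h r, of L] unfolding CB_def CA_def px .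
  qed
  have inst_iff: "(pth k i m ` {..<Suc m} \<subseteq> instances n (parf k i) k \<pi> L) \<longleftrightarrow>
      (\<forall>v\<in>B. L v < L x) \<and> (\<forall>v\<in>A. L x < L v) \<and> \<Phi>B L \<and> \<Phi>A L" for L
  proof -
    have "(pth k i m ` {..<Suc m} \<subseteq> instances n (parf k i) k \<pi> L) \<longleftrightarrow>
        (\<forall>j\<in>{..<Suc m}. is_instance k \<pi> L (pth k i m j))"
      unfolding instances_def using dp by blast
    also have "\<dots> \<longleftrightarrow> (\<forall>j\<in>{..<Suc m}. (\<forall>v\<in>CB k i m \<pi> j. L v < L x) \<and> (\<forall>v\<in>CA k i m \<pi> j. L x < L v) \<and>
      chain_ok (rho k \<pi>) (CB k i m \<pi> j) L \<and> chain_ok (rho k \<pi>) (CA k i m \<pi> j) L)"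
      using ij by simp
    also have "\<dots> \<longleftrightarrow> (\<forall>v\<in>B. L v < L x) \<and> (\<forall>v\<in>A. L x < L v) \<and> \<Phi>B L \<and> \<Phi>A L"
      unfolding B_def A_def \<Phi>B_def \<Phi>A_def by blast
    finally show ?thesis .
  qed
  have fB: "finite B" and fA: "finite A" unfolding B_def A_def using CB_fin by auto
  have disjAB: "A \<inter> B = {}"
  proof (rule ccontr)
    assume "A \<inter> B \<noteq> {}"
    then obtain v j j' where j: "j < Suc m" "v \<in> CA k i m \<pi> j" and j': "j' < Suc m" "v \<in> CB k i m \<pi> j'"
      unfolding A_def B_def by blast
    show False
    proof (cases "j = j'")
      case True
      then have "v \<in> CB k i m \<pi> j \<inter> CA k i m \<pi> j" using j j' by simp
      then show False using BA_disj[OF pat i(1), of m j] by simp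
    next
      case False
      have "j \<le> m" "j' \<le> m" using j j' by auto
      moreover have "v \<in> CB k i m \<pi> j \<union> CA k i m \<pi> j" "v \<in> CB k i m \<pi> j' \<union> CA k i m \<pi> j'"
        using j j' by auto
      ultimately show False using blk_disj[OF i(1) _ _ False] by blast
    qed
  qed
  have xA: "x \<notin> A" and xB: "x \<notin> B" using x_notin[OF i] unfolding A_def B_def x_def by blast+
  have rB: "rinv B \<Phi>B" unfolding \<Phi>B_def B_def by (rule rinv_chains) auto
  have rA: "rinv A \<Phi>A" unfolding \<Phi>A_def A_def by (rule rinv_chains) auto
  have "{L \<in> labelings n. pth k i m ` {..<Suc m} \<subseteq> instances n (parf k i) k \<pi> L}
      = {L \<in> lab (insert x (B \<union> A)). (\<forall>v\<in>B. L v < L x) \<and> (\<forall>v\<in>A. L x < L v) \<and> \<Phi>B L \<and> \<Phi>A L}"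
    using inst_iff lab_eq by simp
  then have c0: "card {L \<in> labelings n. pth k i m ` {..<Suc m} \<subseteq> instances n (parf k i) k \<pi> L}
      = card {M \<in> lab B. \<Phi>B M} * card {M \<in> lab A. \<Phi>A M}"
    using ordinal_count[OF fA fB disjAB xA xB rA rB] by simp
  have dB: "\<forall>j<Suc m. \<forall>j'<Suc m. j \<noteq> j' \<longrightarrow> CB k i m \<pi> j \<inter> CB k i m \<pi> j' = {}"
  proof (intro allI impI equals0I)
    fix j j' v assume jj: "j < Suc m" "j' < Suc m" "j \<noteq> j'" and v: "v \<in> CB k i m \<pi> j \<inter> CB k i m \<pi> j'"
    have "j \<le> m" "j' \<le> m" using jj by auto
    moreover have "v \<in> CB k i m \<pi> j \<union> CA k i m \<pi> j" "v \<in> CB k i m \<pi> j' \<union> CA k i m \<pi> j'"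
      using v by auto
    ultimately show False using blk_disj[OF i(1) _ _ jj(3)] by blast
  qed
  have dA: "\<forall>j<Suc m. \<forall>j'<Suc m. j \<noteq> j' \<longrightarrow> CA k i m \<pi> j \<inter> CA k i m \<pi> j' = {}"
  proof (intro allI impI equals0I)
    fix j j' v assume jj: "j < Suc m" "j' < Suc m" "j \<noteq> j'" and v: "v \<in> CA k i m \<pi> j \<inter> CA k i m \<pi> j'"
    have "j \<le> m" "j' \<le> m" using jj by auto
    moreover have "v \<in> CB k i m \<pi> j \<union> CA k i m \<pi> j" "v \<in> CB k i m \<pi> j' \<union> CA k i m \<pi> j'"
      using v by auto
    ultimately show False using blk_disj[OF i(1) _ _ jj(3)] by blast
  qed
  have finB: "\<forall>j<Suc m. finite (CB k i m \<pi> j)" and finA: "\<forall>j<Suc m. finite (CA k i m \<pi> j)"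
    using CB_fin by auto
  have injB: "\<forall>j<Suc m. inj_on (rho k \<pi>) (CB k i m \<pi> j)" and injA: "\<forall>j<Suc m. inj_on (rho k \<pi>) (CA k i m \<pi> j)"
    using rho_inj[OF pat k2 i] by auto
  have cB: "card {M \<in> lab B. \<Phi>B M} = (\<Prod>j<Suc m. (\<Sum>l\<le>j. card (CB k i m \<pi> l)) choose card (CB k i m \<pi> j))"
    using conjunct1[OF chains_count[OF finB injB dB]] unfolding B_def \<Phi>B_def .
  have cA: "card {M \<in> lab A. \<Phi>A M} = (\<Prod>j<Suc m. (\<Sum>l\<le>j. card (CA k i m \<pi> l)) choose card (CA k i m \<pi> j))"
    using conjunct1[OF chains_count[OF finA injA dA]] unfolding A_def \<Phi>A_def .
  have eB: "(\<Prod>j<Suc m. (\<Sum>l\<le>j. card (CB k i m \<pi> l)) choose card (CB k i m \<pi> j))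
      = (\<Prod>j<m. (Suc j * (\<pi> 1 - 1)) choose (\<pi> 1 - 1)) * ((m * (\<pi> 1 - 1) + (\<pi> i - 1)) choose (\<pi> i - 1))"
  proof (rule prod_eval)
    show "\<forall>j<m. card (CB k i m \<pi> j) = \<pi> 1 - 1" using CB_card(1)[OF pat k2 i] by simp
    show "card (CB k i m \<pi> m) = \<pi> i - 1" using CB_card(1)[OF pat k2 i] by simp
  qed
  have eA: "(\<Prod>j<Suc m. (\<Sum>l\<le>j. card (CA k i m \<pi> l)) choose card (CA k i m \<pi> j))
      = (\<Prod>j<m. (Suc j * (k - \<pi> 1)) choose (k - \<pi> 1)) * ((m * (k - \<pi> 1) + (k - \<pi> i)) choose (k - \<pi> i))"
  proof (rule prod_eval)
    show "\<forall>j<m. card (CA k i m \<pi> j) = k - \<pi> 1" using CB_card(2)[OF pat k2 i] by simp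
    show "card (CA k i m \<pi> m) = k - \<pi> i" using CB_card(2)[OF pat k2 i] by simp
  qed
  have "card {L \<in> labelings n. pth k i m ` {..<Suc m} \<subseteq> instances n (parf k i) k \<pi> L}
     = ((\<Prod>j<m. (Suc j * (\<pi> 1 - 1)) choose (\<pi> 1 - 1)) * ((m * (\<pi> 1 - 1) + (\<pi> i - 1)) choose (\<pi> i - 1)))
       * ((\<Prod>j<m. (Suc j * (k - \<pi> 1)) choose (k - \<pi> 1)) * ((m * (k - \<pi> 1) + (k - \<pi> i)) choose (k - \<pi> i)))"
    by (simp only: c0 cB cA eB eA)
  then show ?thesis unfolding n_def .
qed

lemma binom_prod: "((N + a) choose a) * fact a = (\<Prod>t\<in>{1..a}. N + t :: nat)"
proof (induction a)
  case 0 then show ?case by simp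
next
  case (Suc a)
  have "((N + Suc a) choose Suc a) * fact (Suc a) = ((Suc (N + a)) choose Suc a) * Suc a * fact a"
    by (simp add: algebra_simps)
  also have "((Suc (N + a)) choose Suc a) * Suc a = Suc (N + a) * ((N + a) choose a)"
    using Suc_times_binomial_eq[of "N + a" a] by simp
  also have "Suc (N + a) * ((N + a) choose a) * fact a = (N + Suc a) * (\<Prod>t\<in>{1..a}. N + t)"
    using Suc.IH by (simp add: algebra_simps)
  also have "\<dots> = (\<Prod>t\<in>{1..Suc a}. N + t)" by (simp add: prod.cl_ivl_Suc)
  finally show ?case .
qed

lemma prod_split: fixes a b :: nat shows "a \<le> b \<Longrightarrow> (\<Prod>t\<in>{1..b}. f t) = (\<Prod>t\<in>{1..a}. f t) * (\<Prod>t\<in>{a<..b}. (f t :: nat))"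
proof -
  assume ab: "a \<le> b"
  have "{1..b} = {1..a} \<union> {a<..b}" using ab by auto
  moreover have "{1..a} \<inter> {a<..b} = {}" by auto
  ultimately show ?thesis by (simp add: prod.union_disjoint)
qed

lemma nat_final:
  fixes a a' c d K :: nat
  assumes cd: "c + d = K" and lt: "a < a'" "a' \<le> K" and c0: "0 < c" and d0: "0 < d"
    and E1: "(a + 1) * d = (K - a' + 1) * c" and E2: "a' * d = (K - a) * c"
  shows "c = d \<and> a + a' = K"
proof -
  define e where "e = a' - a - 1"
  have Ka: "K - a = (K - a' + 1) + e" using lt e_def by simp
  have a'e: "a' = (a + 1) + e" using lt e_def by simp
  have "(a + 1) * d + e * d = (K - a' + 1) * c + e * c" using E2 unfolding Ka a'e by (simp add: algebra_simps)
  then have ed: "e * d = e * c" using E1 by simp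
  show ?thesis
  proof (cases "e = 0")
    case False
    then have cdq: "c = d" using ed by simp
    then have "a + 1 = K - a' + 1" using E1 d0 by simp
    then show ?thesis using cdq lt by simp
  next
    case True
    then have a1: "a' = a + 1" using a'e by simp
    have "(a + 1) * d = (K - a) * c" using E2 a1 by simp
    then have "int (a + 1) * int d = int (K - a) * int c" by (metis of_nat_mult)
    moreover have "int c = int K - int d" using cd by simp
    ultimately have eq: "(int a + 1) * int d = (int K - int a) * (int K - int d)" using lt by (simp add: of_nat_diff add.commute)
    then have eq2: "(int K + 1) * int d = int K * (int K - int a)" by (simp add: algebra_simps)
    define f where "f = int K - int a - int d"
    have f: "(int K + 1) * f = int K - int a" unfolding f_def using eq2 by (simp add: algebra_simps)
    have "0 \<le> int K - int a" "int K - int a < int K + 1" using lt by auto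
    then have "f = 0"
    proof -
      assume h: "0 \<le> int K - int a" "int K - int a < int K + 1"
      have "\<not> f \<ge> 1"
      proof
        assume "f \<ge> 1"
        then have "(int K + 1) * f \<ge> (int K + 1) * 1" by (intro mult_left_mono) auto
        then show False using f h by simp
      qed
      moreover have "\<not> f \<le> -1"
      proof
        assume "f \<le> -1"
        then have "(int K + 1) * f \<le> (int K + 1) * (-1)" by (intro mult_left_mono) auto
        then show False using f h by simp
      qed
      ultimately show "f = 0" by simp
    qed
    then have "int K - int a = 0" using f by simp
    then have "int d = 0" using eq2 by simp
    then show ?thesis using d0 by simp
  qed
qed

lemma poly_zero_nat:
  fixes p :: "real poly"
  assumes "\<And>m::nat. poly p (real m) = 0"
  shows "p = 0"
proof (rule ccontr)
  assume "p \<noteq> 0"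
  then have "finite {x. poly p x = 0}" by (rule poly_roots_finite)
  moreover have "range real \<subseteq> {x. poly p x = 0}" using assms by auto
  ultimately have "finite (range real)" by (rule finite_subset[rotated])
  then have "finite (UNIV :: nat set)" using finite_imageD inj_of_nat by blast
  then show False by simp
qed

lemma root_rel:
  assumes "0 < c" "real t + real d * (- (real s / real c)) = 0"
  shows "t * c = d * s"
proof -
  have "real t * real c = real d * real s" using assms by (simp add: field_simps)
  then show ?thesis by (metis of_nat_eq_iff of_nat_mult)
qed

lemma key_lt:
  fixes a a' c d K :: nat
  assumes cd: "c + d = K" and lt: "a < a'" "a' \<le> K"
    and eq: "\<forall>m. ((m*c + a) choose a) * ((m*d + (K - a)) choose (K - a))
              = ((m*c + a') choose a') * ((m*d + (K - a')) choose (K - a'))"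
  shows "c = d \<and> a + a' = K"
proof -
  define U where "U = (\<lambda>m::nat. \<Prod>t\<in>{a<..a'}. m*c + t)"
  define W where "W = (\<lambda>m::nat. \<Prod>t\<in>{K-a'<..K-a}. m*d + t)"
  define \<alpha> :: nat where "\<alpha> = fact a' * fact (K - a')"
  define \<beta> :: nat where "\<beta> = fact a * fact (K - a)"
  have nat_id: "W m * \<alpha> = U m * \<beta>" for m
  proof -
    define Pc where "Pc = (\<lambda>x. \<Prod>t\<in>{1..x}. m*c + t)"
    define Pd where "Pd = (\<lambda>x. \<Prod>t\<in>{1..x}. m*d + t)"
    have e: "((m*c + a) choose a) * ((m*d + (K - a)) choose (K - a))
              = ((m*c + a') choose a') * ((m*d + (K - a')) choose (K - a'))" using eq by blast
    have b1: "((m*c + x) choose x) * fact x = Pc x" for x unfolding Pc_def by (rule binom_prod)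
    have b2: "((m*d + x) choose x) * fact x = Pd x" for x unfolding Pd_def by (rule binom_prod)
    have "Pc a * Pd (K - a) * \<alpha> = (((m*c + a) choose a) * ((m*d + (K - a)) choose (K - a))) * (fact a * fact (K - a) * \<alpha>)"
      using b1[of a] b2[of "K - a"] by (simp add: algebra_simps)
    also have "\<dots> = (((m*c + a') choose a') * ((m*d + (K - a')) choose (K - a'))) * (fact a' * fact (K - a') * \<beta>)"
      using e unfolding \<alpha>_def \<beta>_def by (simp add: algebra_simps)
    also have "\<dots> = Pc a' * Pd (K - a') * \<beta>"
      using b1[of a'] b2[of "K - a'"] by (simp add: algebra_simps)
    finally have h: "Pc a * Pd (K - a) * \<alpha> = Pc a' * Pd (K - a') * \<beta>" .
    have s1: "Pc a' = Pc a * U m" unfolding Pc_def U_def using prod_split lt(1) by simp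
    have s2: "Pd (K - a) = Pd (K - a') * W m" unfolding Pd_def W_def using prod_split lt by simp
    have "(Pc a * Pd (K - a')) * (W m * \<alpha>) = (Pc a * Pd (K - a')) * (U m * \<beta>)"
      using h unfolding s1 s2 by (simp add: algebra_simps)
    moreover have "Pc a * Pd (K - a') \<noteq> 0" unfolding Pc_def Pd_def by simp
    ultimately show ?thesis by simp
  qed
  define Up :: "real poly" where "Up = (\<Prod>t\<in>{a<..a'}. [:real t, real c:])"
  define Wp :: "real poly" where "Wp = (\<Prod>t\<in>{K-a'<..K-a}. [:real t, real d:])"
  have pU: "poly Up y = (\<Prod>t\<in>{a<..a'}. real t + real c * y)" for y by (simp add: Up_def poly_prod mult.commute)
  have pW: "poly Wp y = (\<Prod>t\<in>{K-a'<..K-a}. real t + real d * y)" for y by (simp add: Wp_def poly_prod mult.commute)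
  have "smult (real \<alpha>) Wp - smult (real \<beta>) Up = 0"
  proof (rule poly_zero_nat)
    fix m :: nat
    have "real (W m * \<alpha>) = real (U m * \<beta>)" using nat_id by simp
    then have "real \<alpha> * (\<Prod>t\<in>{K-a'<..K-a}. real t + real d * real m) = real \<beta> * (\<Prod>t\<in>{a<..a'}. real t + real c * real m)"
      unfolding W_def U_def by (simp add: algebra_simps)
    then show "poly (smult (real \<alpha>) Wp - smult (real \<beta>) Up) (real m) = 0" using pU pW by simp
  qed
  then have peq: "real \<alpha> * poly Wp y = real \<beta> * poly Up y" for y
    by (metis eq_iff_diff_eq_0 poly_0 poly_diff poly_smult)
  have \<alpha>0: "real \<alpha> \<noteq> 0" and \<beta>0: "real \<beta> \<noteq> 0" unfolding \<alpha>_def \<beta>_def by simp_all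
  have Z: "(\<exists>t\<in>{a<..a'}. real t + real c * y = 0) \<longleftrightarrow> (\<exists>t\<in>{K-a'<..K-a}. real t + real d * y = 0)" for y
  proof -
    have "(poly Up y = 0) \<longleftrightarrow> (poly Wp y = 0)" using peq[of y] \<alpha>0 \<beta>0 by auto
    then show ?thesis unfolding pU pW by simp
  qed
  have Kaa: "K - a' < K - a" using lt by simp
  have c0: "0 < c"
  proof (rule ccontr)
    assume "\<not> 0 < c"
    then have c: "c = 0" by simp
    then have d: "0 < d" using cd lt by simp
    have "\<exists>t\<in>{K-a'<..K-a}. real t + real d * (- (real (K - a) / real d)) = 0"
      using Kaa d by (intro bexI[of _ "K - a"]) auto
    then have "\<exists>t\<in>{a<..a'}. real t + real c * (- (real (K - a) / real d)) = 0" using Z by blast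
    then show False using c by auto
  qed
  have d0: "0 < d"
  proof (rule ccontr)
    assume "\<not> 0 < d"
    then have d: "d = 0" by simp
    have "\<exists>t\<in>{a<..a'}. real t + real c * (- (real a' / real c)) = 0"
      using lt c0 by (intro bexI[of _ a']) auto
    then have "\<exists>t\<in>{K-a'<..K-a}. real t + real d * (- (real a' / real c)) = 0" using Z by blast
    then show False using d lt by auto
  qed
  have E1a: "(K - a' + 1) * c \<le> d * (a + 1)"
  proof -
    have "\<exists>t\<in>{a<..a'}. real t + real c * (- (real (a + 1) / real c)) = 0"
      using lt c0 by (intro bexI[of _ "a + 1"]) auto
    then obtain t where t: "t \<in> {K-a'<..K-a}" "real t + real d * (- (real (a + 1) / real c)) = 0" using Z by blast
    have "t * c = d * (a + 1)" by (rule root_rel[OF c0 t(2)])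
    moreover have "(K - a' + 1) * c \<le> t * c" using t(1) by (intro mult_le_mono1) auto
    ultimately show ?thesis by simp
  qed
  have E1b: "(a + 1) * d \<le> c * (K - a' + 1)"
  proof -
    have "\<exists>t\<in>{K-a'<..K-a}. real t + real d * (- (real (K - a' + 1) / real d)) = 0"
      using Kaa d0 by (intro bexI[of _ "K - a' + 1"]) auto
    then obtain t where t: "t \<in> {a<..a'}" "real t + real c * (- (real (K - a' + 1) / real d)) = 0" using Z by blast
    have "t * d = c * (K - a' + 1)" by (rule root_rel[OF d0 t(2)])
    moreover have "(a + 1) * d \<le> t * d" using t(1) by (intro mult_le_mono1) auto
    ultimately show ?thesis by simp
  qed
  have E2a: "a' * d \<le> (K - a) * c"
  proof -
    have "\<exists>t\<in>{a<..a'}. real t + real c * (- (real a' / real c)) = 0"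
      using lt c0 by (intro bexI[of _ a']) auto
    then obtain t where t: "t \<in> {K-a'<..K-a}" "real t + real d * (- (real a' / real c)) = 0" using Z by blast
    have "t * c = d * a'" by (rule root_rel[OF c0 t(2)])
    moreover have "t * c \<le> (K - a) * c" using t(1) by (intro mult_le_mono1) auto
    ultimately show ?thesis by (simp add: mult.commute)
  qed
  have E2b: "(K - a) * c \<le> a' * d"
  proof -
    have "\<exists>t\<in>{K-a'<..K-a}. real t + real d * (- (real (K - a) / real d)) = 0"
      using Kaa d0 by (intro bexI[of _ "K - a"]) auto
    then obtain t where t: "t \<in> {a<..a'}" "real t + real c * (- (real (K - a) / real d)) = 0" using Z by blast
    have "t * d = c * (K - a)" by (rule root_rel[OF d0 t(2)])
    moreover have "t * d \<le> a' * d" using t(1) by (intro mult_le_mono1) auto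
    ultimately show ?thesis by (simp add: mult.commute)
  qed
  have E1: "(a + 1) * d = (K - a' + 1) * c" using E1a E1b by (simp add: mult.commute)
  have E2: "a' * d = (K - a) * c" using E2a E2b by simp
  show ?thesis by (rule nat_final[OF cd lt c0 d0 E1 E2])
qed

lemma key_arith:
  fixes a a' c d K :: nat
  assumes cd: "c + d = K" and a: "a \<le> K" "a' \<le> K"
    and eq: "\<forall>m. ((m*c + a) choose a) * ((m*d + (K - a)) choose (K - a))
              = ((m*c + a') choose a') * ((m*d + (K - a')) choose (K - a'))"
  shows "a = a' \<or> (c = d \<and> a + a' = K)"
proof (cases "a < a'")
  case True then show ?thesis using key_lt[OF cd True a(2) eq] by simp
next
  case False
  show ?thesis
  proof (cases "a' < a")
    case True
    have eq': "\<forall>m. ((m*c + a') choose a') * ((m*d + (K - a')) choose (K - a'))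
              = ((m*c + a) choose a) * ((m*d + (K - a)) choose (K - a))" using eq by simp
    show ?thesis using key_lt[OF cd True a(1) eq'] by simp
  next
    case False then show ?thesis using \<open>\<not> a < a'\<close> by simp
  qed
qed

lemma core:
  assumes pat: "pattern k \<pi>" and pat': "pattern k \<pi>'" and e1: "\<pi> 1 = \<pi>' 1"
    and ss: "super_strongly_cfw_equiv k \<pi> \<pi>'" and i: "i \<in> {1..k}"
  shows "\<pi> i = \<pi>' i \<or> (2 * \<pi> 1 = k + 1 \<and> \<pi> i + \<pi>' i = k + 1)"
proof (cases "2 \<le> k")
  case False
  then have "i = 1" using i by auto
  then show ?thesis using e1 by simp
next
  case k2: True
  have i1: "1 \<le> i" "i \<le> k" using i by auto
  have r1: "\<pi> 1 \<in> {1..k}" "\<pi> i \<in> {1..k}" using pat_img[OF pat] i k2 by auto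
  have r2: "\<pi>' i \<in> {1..k}" using pat_img[OF pat'] i by auto
  define c where "c = \<pi> 1 - 1"
  define d where "d = k - \<pi> 1"
  define K where "K = k - 1"
  define a where "a = \<pi> i - 1"
  define a' where "a' = \<pi>' i - 1"
  define Ec where "Ec = (\<lambda>m. \<Prod>j<m. (Suc j * c) choose c)"
  define Ed where "Ed = (\<lambda>m. \<Prod>j<m. (Suc j * d) choose d)"
  have Ec0: "Ec m \<noteq> 0" for m unfolding Ec_def by (simp add: binomial_eq_0_iff)
  have Ed0: "Ed m \<noteq> 0" for m unfolding Ed_def by (simp add: binomial_eq_0_iff)
  have kmi: "k - \<pi> i = K - a" "k - \<pi>' i = K - a'" using r1 r2 unfolding K_def a_def a'_def by auto
  have c': "\<pi>' 1 - 1 = c" "k - \<pi>' 1 = d" using e1 c_def d_def by auto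
  have eqm: "((m*c + a) choose a) * ((m*d + (K - a)) choose (K - a))
              = ((m*c + a') choose a') * ((m*d + (K - a')) choose (K - a'))" for m
  proof -
    define n where "n = k + m * (k - 1)"
    have rf: "rooted_forest n (parf k i)" using rooted i1 by blast
    have "card {L \<in> labelings n. pth k i m ` {..<Suc m} \<subseteq> instances n (parf k i) k \<pi> L}
        = card {L \<in> labelings n. pth k i m ` {..<Suc m} \<subseteq> instances n (parf k i) k \<pi>' L}"
      by (rule atleast_eq[OF ss rf])
    moreover have "card {L \<in> labelings n. pth k i m ` {..<Suc m} \<subseteq> instances n (parf k i) k \<pi> L}
        = (Ec m * ((m * c + a) choose a)) * (Ed m * ((m * d + (K - a)) choose (K - a)))"
      unfolding kmi(1)[symmetric] unfolding Ec_def Ed_def c_def d_def a_def n_def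
      by (rule count_formula[OF pat k2 i1])
    moreover have "card {L \<in> labelings n. pth k i m ` {..<Suc m} \<subseteq> instances n (parf k i) k \<pi>' L}
        = (Ec m * ((m * c + a') choose a')) * (Ed m * ((m * d + (K - a')) choose (K - a')))"
      unfolding kmi(2)[symmetric] unfolding Ec_def Ed_def c'(1)[symmetric] c'(2)[symmetric] a'_def n_def
      by (rule count_formula[OF pat' k2 i1])
    ultimately have "(Ec m * ((m * c + a) choose a)) * (Ed m * ((m * d + (K - a)) choose (K - a)))
        = (Ec m * ((m * c + a') choose a')) * (Ed m * ((m * d + (K - a')) choose (K - a')))"
      by simp
    then have "(Ec m * Ed m) * (((m * c + a) choose a) * ((m * d + (K - a)) choose (K - a)))
        = (Ec m * Ed m) * (((m * c + a') choose a') * ((m * d + (K - a')) choose (K - a')))"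
      by (simp add: algebra_simps)
    then show ?thesis using Ec0 Ed0 by simp
  qed
  have cd: "c + d = K" using r1 unfolding c_def d_def K_def by auto
  have aK: "a \<le> K" "a' \<le> K" using r1 r2 unfolding a_def a'_def K_def by auto
  have "a = a' \<or> (c = d \<and> a + a' = K)" by (rule key_arith[OF cd aK]) (use eqm in blast)
  then show ?thesis
  proof
    assume "a = a'" then show ?thesis using r1 r2 unfolding a_def a'_def by auto
  next
    assume h: "c = d \<and> a + a' = K"
    then have "2 * \<pi> 1 = k + 1" using r1 unfolding c_def d_def by auto
    moreover have "\<pi> i + \<pi>' i = k + 1" using h r1 r2 k2 unfolding a_def a'_def K_def by auto
    ultimately show ?thesis by simp
  qed
qed

theorem lemma4p36:
  fixes k :: nat and \<pi> \<pi>' :: "nat \<Rightarrow> nat"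
  assumes "pattern k \<pi>" and "pattern k \<pi>'"
    and "\<pi> 1 = \<pi>' 1"
    and "super_strongly_cfw_equiv k \<pi> \<pi>'"
  shows "(\<not> (odd k \<and> 2 * \<pi> 1 = k + 1) \<longrightarrow> (\<forall>i\<in>{1..k}. \<pi> i = \<pi>' i)) \<and>
         (odd k \<and> 2 * \<pi> 1 = k + 1 \<longrightarrow>
            (\<forall>i\<in>{1..k}. \<pi> i = \<pi>' i \<or> \<pi> i + \<pi>' i = k + 1))"
proof (intro conjI impI ballI)
  fix i assume nm: "\<not> (odd k \<and> 2 * \<pi> 1 = k + 1)" and i: "i \<in> {1..k}"
  have c: "\<pi> i = \<pi>' i \<or> (2 * \<pi> 1 = k + 1 \<and> \<pi> i + \<pi>' i = k + 1)" by (rule core[OF assms i])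
  have "\<not> (2 * \<pi> 1 = k + 1)"
  proof
    assume h: "2 * \<pi> 1 = k + 1"
    then have "odd k" by presburger
    then show False using nm h by simp
  qed
  then show "\<pi> i = \<pi>' i" using c by simp
next
  fix i assume "odd k \<and> 2 * \<pi> 1 = k + 1" and i: "i \<in> {1..k}"
  show "\<pi> i = \<pi>' i \<or> \<pi> i + \<pi>' i = k + 1" using core[OF assms i] by auto
qed

end
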